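(* Let $m,n\in\mathbb N$. The truncation map $\mathfrak{Tr}_{n+1,n}:\widehat{\mathcal E}^{m|n+1}_+\to\widehat{\mathcal E}^{m|n}_+$ commutes with the bar involutions.
   Context: $\mathcal U=U_q(\mathfrak{sl}(\infty))$ over $\mathbb Q(q)$ generated by $E_a,F_a,K_{a,a+1}^{\pm1}$ ($a\in\mathbb Z$), comultiplication $\Delta(E_a)=1\otimes E_a+E_a\otimes K_{a,a+1}^{-1}$, $\Delta(F_a)=F_a\otimes1+K_{a,a+1}\otimes F_a$; bar map $\bar q=q^{-1}$, fixing $E_a,F_a$, inverting $K_{a,a+1}$. $\Lambda^m\mathbb V$: basis $v_{a_1}\wedge\cdots\wedge v_{a_m}$ ($a_1>\cdots>a_m$); for index set $S$, $F_a$ replaces $a$ by $a+1$ if $a\in S,a+1\notin S$ (else $0$), $E_a$ replaces $a+1$ by $a$ if $a+1\in S,a\notin S$ (else $0$), $K_{a,a+1}$ acts by $q^{[a\in S]-[a+1\in S]}$. $\Lambda^n\mathbb W$: basis $w_{b_1}\wedge\cdots\wedge w_{b_n}$ ($b_1<\cdots<b_n$); $F_a$ replaces $a+1$ by $a$ if $a+1\in S,a\notin S$ (else $0$), $E_a$ replaces $a$ by $a+1$ if $a\in S,a+1\notin S$ (else $0$), $K_{a,a+1}$ acts by $q^{[a+1\in S]-[a\in S]}$. $I(m|n)=\{-m,\dots,-1\}\cup\{1,\dots,n\}$; $\mathbb Z^{m|n}_+=\{f:f(-m)>\cdots>f(-1),\ f(1)<\cdots<f(n)\}$, $\mathbb Z^{m|n}_{++}=\{f\in\mathbb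 Z^{m|n}_+:f(n)\le n\}$. $\mathcal E^{m|n}=\Lambda^m\mathbb V\otimes\Lambda^n\mathbb W$ with basis $K_f=v_{f(-m)}\wedge\cdots\wedge v_{f(-1)}\otimes w_{f(1)}\wedge\cdots\wedge w_{f(n)}$. $\widehat{\mathcal E}^{m|n}$: formal sums $\sum c_fK_f$ such that for every $d\in\mathbb N$ only finitely many $f$ with $c_f\ne0$ have $f(i)\ge-d$ for all $1\le i\le n$; $\widehat{\mathcal E}^{m|n}_+$: those supported on $\mathbb Z^{m|n}_{++}$. Super Bruhat ordering: with $d_i(j)=-\mathrm{sgn}(i)\delta_{ij}$, $f\downarrow g$ if $g=f-d_i+d_j$ ($i<0<j$, $f(i)=f(j)$), or $g=f\cdot\tau_{ij}$ ($i<j<0$, $f(i)>f(j)$), or $g=f\cdot\tau_{ij}$ ($0<i<j$, $f(i)<f(j)$); $\succ$ is the transitive closure. $f$ is typical if $\{f(i):i<0\}\cap\{f(j):j>0\}=\emptyset$. The bar involution on $\widehat{\mathcal E}^{m|n}$ is the unique continuous anti-linear map fixing $K_f$ for typical $f$, with $\overline{Xu}=\bar X\bar u$ for $X\in\mathcal U$, which is an involution and satisfies $\overline{K_f}\in K_f+$ (possibly infinite) $\mathbb Z[q,q^{-1}]$-combination of $K_g$ with $g\prec f$. $\mathfrak{Tr}_{n+1,n}$ is the (continuous) linear map sending $K_f$ ($f\in\mathbb Z^{m|n+1}_{++}$) to $K_{f^{(n)}}$ if $f(n+1)=n+1$ and to $0$ otherwise, $f^{(n)}$ being the restriction of $f$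 to $I(m|n)$. *)

theory Defs
  imports "HOL-Computational_Algebra.Polynomial" "HOL-Computational_Algebra.Fraction_Field"
begin

type_synonym qq = "rat poly fract"

definition qvar :: qq where "qvar = Fract [:0, 1:] 1"

definition qpow :: "int \<Rightarrow> qq" where "qpow k = qvar powi k"

text \<open>bar map q |-> q^-1 on Q(q): p(q)/r(q) |-> p(q^-1)/r(q^-1)
  = (reflect p * q^deg r) / (reflect r * q^deg p).\<close>
definition qbar :: "qq \<Rightarrow> qq" where
  "qbar x = (let (p, r) = (SOME (p, r). r \<noteq> 0 \<and> x = Fract p r)
             in Fract (reflect_poly p * monom 1 (degree r)) (reflect_poly r * monom 1 (degree p)))"

definition laurent_int :: "qq set" where
  "laurent_int = {c. \<exists>(p :: int poly) (k :: nat). c = Fract (map_poly of_int p) (monom 1 k)}"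

text \<open>A function f : I(m|n) -> Z is represented by an int => int function vanishing outside I(m|n).\<close>

definition negI :: "nat \<Rightarrow> int set" where "negI m = {- int m .. -1}"
definition posI :: "nat \<Rightarrow> int set" where "posI n = {1 .. int n}"
definition Iset :: "nat \<Rightarrow> nat \<Rightarrow> int set" where "Iset m n = negI m \<union> posI n"

definition Zfun :: "nat \<Rightarrow> nat \<Rightarrow> (int \<Rightarrow> int) set" where
  "Zfun m n = {f. \<forall>i. i \<notin> Iset m n \<longrightarrow> f i = 0}"

definition Zp :: "nat \<Rightarrow> nat \<Rightarrow> (int \<Rightarrow> int) set" where
  "Zp m n = {f \<in> Zfun m n.
     (\<forall>i j. i \<in> negI m \<longrightarrow> j \<in> negI m \<longrightarrow> i < j \<longrightarrow> f i > f j) \<and>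
     (\<forall>i j. i \<in> posI n \<longrightarrow> j \<in> posI n \<longrightarrow> i < j \<longrightarrow> f i < f j)}"

text \<open>Z^{m|n}_{++}: additionally f(n) <= n (vacuous when n = 0, since then f 0 = 0).\<close>
definition Zpp :: "nat \<Rightarrow> nat \<Rightarrow> (int \<Rightarrow> int) set" where
  "Zpp m n = {f \<in> Zp m n. f (int n) \<le> int n}"

definition typical :: "nat \<Rightarrow> nat \<Rightarrow> (int \<Rightarrow> int) \<Rightarrow> bool" where
  "typical m n f \<longleftrightarrow> f ` negI m \<inter> f ` posI n = {}"

definition dvec :: "int \<Rightarrow> int \<Rightarrow> int" where
  "dvec i = (\<lambda>j. if j = i then - sgn i else 0)"

definition swapf :: "(int \<Rightarrow> int) \<Rightarrow> int \<Rightarrow> int \<Rightarrow> (int \<Rightarrow> int)" where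
  "swapf f i j = (\<lambda>k. if k = i then f j else if k = j then f i else f k)"

definition bruhat_step :: "nat \<Rightarrow> nat \<Rightarrow> (int \<Rightarrow> int) \<Rightarrow> (int \<Rightarrow> int) \<Rightarrow> bool" where
  "bruhat_step m n f g \<longleftrightarrow>
     (\<exists>i j. i \<in> negI m \<and> j \<in> posI n \<and> f i = f j \<and> g = (\<lambda>k. f k - dvec i k + dvec j k)) \<or>
     (\<exists>i j. i \<in> negI m \<and> j \<in> negI m \<and> i < j \<and> f i > f j \<and> g = swapf f i j) \<or>
     (\<exists>i j. i \<in> posI n \<and> j \<in> posI n \<and> i < j \<and> f i < f j \<and> g = swapf f i j)"

text \<open>bruhat_gt m n f g  means  f \<succ> g  (equivalently g \<prec> f)\<close>
definition bruhat_gt :: "nat \<Rightarrow> nat \<Rightarrow> (int \<Rightarrow> int) \<Rightarrow> (int \<Rightarrow> int) \<Rightarrow> bool" where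
  "bruhat_gt m n = tranclp (bruhat_step m n)"

text \<open>A formal sum \<Sum> c_f K_f is represented by its coefficient function f |-> c_f.\<close>
type_synonym fsum = "(int \<Rightarrow> int) \<Rightarrow> qq"

definition Ehat :: "nat \<Rightarrow> nat \<Rightarrow> fsum set" where
  "Ehat m n = {u. (\<forall>f. f \<notin> Zp m n \<longrightarrow> u f = 0) \<and>
      (\<forall>d::nat. finite {f. u f \<noteq> 0 \<and> (\<forall>i \<in> posI n. f i \<ge> - int d)})}"

definition Ehatp :: "nat \<Rightarrow> nat \<Rightarrow> fsum set" where
  "Ehatp m n = {u \<in> Ehat m n. \<forall>f. f \<notin> Zpp m n \<longrightarrow> u f = 0}"

definition Kb :: "(int \<Rightarrow> int) \<Rightarrow> fsum" where
  "Kb f = (\<lambda>g. if g = f then 1 else 0)"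

definition fs_add :: "fsum \<Rightarrow> fsum \<Rightarrow> fsum" where
  "fs_add u v = (\<lambda>f. u f + v f)"

definition fs_smult :: "qq \<Rightarrow> fsum \<Rightarrow> fsum" where
  "fs_smult c u = (\<lambda>f. c * u f)"

text \<open>Basic neighbourhoods of 0 of the (linear) topology defining the completion:
  closure of the span of the K_f having f(i) < -d for some i > 0.\<close>
definition nbhd :: "nat \<Rightarrow> nat \<Rightarrow> nat \<Rightarrow> fsum set" where
  "nbhd m n d = {u \<in> Ehat m n. \<forall>f. u f \<noteq> 0 \<longrightarrow> (\<exists>i \<in> posI n. f i < - int d)}"

definition continuous_fs :: "nat \<Rightarrow> nat \<Rightarrow> (fsum \<Rightarrow> fsum) \<Rightarrow> bool" where
  "continuous_fs m n \<psi> \<longleftrightarrow>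
     (\<forall>d. \<exists>d'. \<forall>u \<in> Ehat m n. \<forall>v \<in> Ehat m n.
         fs_add u (fs_smult (-1) v) \<in> nbhd m n d' \<longrightarrow>
         fs_add (\<psi> u) (fs_smult (-1) (\<psi> v)) \<in> nbhd m n d)"

definition ind :: "bool \<Rightarrow> int" where "ind b = (if b then 1 else 0)"

definition Sset :: "nat \<Rightarrow> (int \<Rightarrow> int) \<Rightarrow> int set" where "Sset m g = g ` negI m"
definition Tset :: "nat \<Rightarrow> (int \<Rightarrow> int) \<Rightarrow> int set" where "Tset n g = g ` posI n"

definition replV :: "nat \<Rightarrow> (int \<Rightarrow> int) \<Rightarrow> int \<Rightarrow> int \<Rightarrow> (int \<Rightarrow> int)" where
  "replV m g a b = (\<lambda>i. if i \<in> negI m \<and> g i = a then b else g i)"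
definition replW :: "nat \<Rightarrow> (int \<Rightarrow> int) \<Rightarrow> int \<Rightarrow> int \<Rightarrow> (int \<Rightarrow> int)" where
  "replW n g a b = (\<lambda>i. if i \<in> posI n \<and> g i = a then b else g i)"

text \<open>Action on \<Lambda>^m V \<otimes> \<Lambda>^n W via the comultiplication, written coefficientwise
  (the coefficient of K_g in X u), which is the continuous extension to the completion.\<close>
definition Eop :: "nat \<Rightarrow> nat \<Rightarrow> int \<Rightarrow> fsum \<Rightarrow> fsum" where
  "Eop m n a u = (\<lambda>g. if g \<in> Zp m n then
      (if a + 1 \<in> Tset n g \<and> a \<notin> Tset n g then u (replW n g (a + 1) a) else 0)
    + (if a \<in> Sset m g \<and> a + 1 \<notin> Sset m g
       then qpow (ind (a \<in> Tset n g) - ind (a + 1 \<in> Tset n g)) * u (replV m g a (a + 1)) else 0)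
    else 0)"

definition Fop :: "nat \<Rightarrow> nat \<Rightarrow> int \<Rightarrow> fsum \<Rightarrow> fsum" where
  "Fop m n a u = (\<lambda>g. if g \<in> Zp m n then
      (if a + 1 \<in> Sset m g \<and> a \<notin> Sset m g then u (replV m g (a + 1) a) else 0)
    + (if a \<in> Tset n g \<and> a + 1 \<notin> Tset n g
       then qpow (ind (a \<in> Sset m g) - ind (a + 1 \<in> Sset m g)) * u (replW n g a (a + 1)) else 0)
    else 0)"

definition Kexp :: "nat \<Rightarrow> nat \<Rightarrow> int \<Rightarrow> (int \<Rightarrow> int) \<Rightarrow> int" where
  "Kexp m n a g = ind (a \<in> Sset m g) - ind (a + 1 \<in> Sset m g) + ind (a + 1 \<in> Tset n g) - ind (a \<in> Tset n g)"

definition Kop :: "nat \<Rightarrow> nat \<Rightarrow> int \<Rightarrow> fsum \<Rightarrow> fsum" where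
  "Kop m n a u = (\<lambda>g. if g \<in> Zp m n then qpow (Kexp m n a g) * u g else 0)"

definition Kinvop :: "nat \<Rightarrow> nat \<Rightarrow> int \<Rightarrow> fsum \<Rightarrow> fsum" where
  "Kinvop m n a u = (\<lambda>g. if g \<in> Zp m n then qpow (- Kexp m n a g) * u g else 0)"

definition is_bar_involution :: "nat \<Rightarrow> nat \<Rightarrow> (fsum \<Rightarrow> fsum) \<Rightarrow> bool" where
  "is_bar_involution m n \<psi> \<longleftrightarrow>
     (\<forall>u \<in> Ehat m n. \<psi> u \<in> Ehat m n) \<and>
     continuous_fs m n \<psi> \<and>
     (\<forall>u \<in> Ehat m n. \<forall>v \<in> Ehat m n. \<psi> (fs_add u v) = fs_add (\<psi> u) (\<psi> v)) \<and>
     (\<forall>c. \<forall>u \<in> Ehat m n. \<psi> (fs_smult c u) = fs_smult (qbar c) (\<psi> u)) \<and>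
     (\<forall>f \<in> Zp m n. typical m n f \<longrightarrow> \<psi> (Kb f) = Kb f) \<and>
     (\<forall>a. \<forall>u \<in> Ehat m n.
        \<psi> (Eop m n a u) = Eop m n a (\<psi> u) \<and>
        \<psi> (Fop m n a u) = Fop m n a (\<psi> u) \<and>
        \<psi> (Kop m n a u) = Kinvop m n a (\<psi> u) \<and>
        \<psi> (Kinvop m n a u) = Kop m n a (\<psi> u)) \<and>
     (\<forall>u \<in> Ehat m n. \<psi> (\<psi> u) = u) \<and>
     (\<forall>f \<in> Zp m n. \<psi> (Kb f) f = 1 \<and>
        (\<forall>g. \<psi> (Kb f) g \<in> laurent_int) \<and>
        (\<forall>g. g \<noteq> f \<longrightarrow> \<psi> (Kb f) g \<noteq> 0 \<longrightarrow> bruhat_gt m n f g))"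

text \<open>Truncation Tr_{n+1,n}: K_f |-> K_{f^(n)} if f(n+1) = n+1, else 0 (f in Z^{m|n+1}_{++});
  coefficientwise: the coefficient of K_g (g in Z^{m|n}_{++}) is the coefficient of K_{g(n+1 := n+1)}.\<close>
definition truncation :: "nat \<Rightarrow> nat \<Rightarrow> fsum \<Rightarrow> fsum" where
  "truncation m n u = (\<lambda>g. if g \<in> Zpp m n then u (g (int n + 1 := int n + 1)) else 0)"

end

theory Submission
  imports Defs
begin

definition apx :: "nat \<Rightarrow> (int \<Rightarrow> int) \<Rightarrow> int \<Rightarrow> (int \<Rightarrow> int)" where
  "apx n g c = g(int n + 1 := c)"

definition Tot :: "nat \<Rightarrow> nat \<Rightarrow> (int \<Rightarrow> int) \<Rightarrow> int" where
  "Tot m N f = (\<Sum>i\<in>Iset m N. f i)"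

lemma finite_negI[simp]: "finite (negI m)" by (simp add: negI_def)
lemma finite_posI[simp]: "finite (posI n)" by (simp add: posI_def)
lemma finite_Iset[simp]: "finite (Iset m n)" by (simp add: Iset_def)
lemma negI_neg: "i \<in> negI m \<Longrightarrow> i < 0" by (simp add: negI_def)
lemma posI_pos: "i \<in> posI n \<Longrightarrow> i > 0" by (simp add: posI_def)
lemma negI_posI_disj: "negI m \<inter> posI n = {}" by (auto simp: negI_def posI_def)
lemma posI_Suc: "posI (Suc n) = insert (int n + 1) (posI n)" by (auto simp: posI_def)
lemma not_posI_n1: "int n + 1 \<notin> posI n" by (simp add: posI_def)
lemma n1_notin_negI: "int n + 1 \<notin> negI m" by (simp add: negI_def)
lemma finite_Sset[simp]: "finite (Sset m g)" by (simp add: Sset_def)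
lemma finite_Tset[simp]: "finite (Tset n g)" by (simp add: Tset_def)

lemma Zp_inj_neg: "G \<in> Zp m N \<Longrightarrow> inj_on G (negI m)"
  unfolding inj_on_def Zp_def
  by (metis (no_types, lifting) linorder_neqE_linordered_idom mem_Collect_eq order_less_irrefl)
lemma Zp_inj_pos: "G \<in> Zp m N \<Longrightarrow> inj_on G (posI N)"
  unfolding inj_on_def Zp_def
  by (metis (no_types, lifting) linorder_neqE_linordered_idom mem_Collect_eq order_less_irrefl)

lemma Sset_replV: "a \<in> Sset m G \<Longrightarrow> Sset m (replV m G a a') = insert a' (Sset m G - {a})"
  unfolding Sset_def replV_def by force
lemma Tset_replV: "Tset N (replV m G a a') = Tset N G"
proof -
  have "\<forall>i\<in>posI N. i \<notin> negI m" using negI_posI_disj by blast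
  then show ?thesis unfolding Tset_def replV_def by (intro image_cong) auto
qed
lemma Sset_replW: "Sset m (replW N G a a') = Sset m G"
proof -
  have "\<forall>i\<in>negI m. i \<notin> posI N" using negI_posI_disj by blast
  then show ?thesis unfolding Sset_def replW_def by (intro image_cong) auto
qed
lemma Tset_replW: "a \<in> Tset N G \<Longrightarrow> Tset N (replW N G a a') = insert a' (Tset N G - {a})"
  unfolding Tset_def replW_def by force

lemma replV_inv: "a' \<notin> Sset m G \<Longrightarrow> replV m (replV m G a a') a' a = G"
  unfolding replV_def Sset_def by (auto simp: fun_eq_iff)
lemma replW_inv: "a' \<notin> Tset N G \<Longrightarrow> replW N (replW N G a a') a' a = G"
  unfolding replW_def Tset_def by (auto simp: fun_eq_iff)

lemma Zp_replV:
  assumes G: "G \<in> Zp m N" and a: "a' \<notin> Sset m G" and d: "a' = a + 1 \<or> a' = a - 1"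
  shows "replV m G a a' \<in> Zp m N"
proof -
  have z: "G \<in> Zfun m N" using G by (simp add: Zp_def)
  have "replV m G a a' \<in> Zfun m N" using z by (auto simp: Zfun_def replV_def Iset_def)
  moreover have "\<forall>i j. i \<in> negI m \<longrightarrow> j \<in> negI m \<longrightarrow> i < j \<longrightarrow> replV m G a a' i > replV m G a a' j"
  proof (intro allI impI)
    fix i j assume ij: "i \<in> negI m" "j \<in> negI m" "i < j"
    have o: "G i > G j" using G ij by (simp add: Zp_def)
    have ni: "G i \<noteq> a'" "G j \<noteq> a'" using a ij by (auto simp: Sset_def)
    show "replV m G a a' i > replV m G a a' j"
      using o ni d ij by (auto simp: replV_def)
  qed
  moreover have "\<forall>i j. i \<in> posI N \<longrightarrow> j \<in> posI N \<longrightarrow> i < j \<longrightarrow> replV m G a a' i < replV m G a a' j"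
    using G negI_posI_disj by (auto simp: Zp_def replV_def)
  ultimately show ?thesis by (simp add: Zp_def)
qed

lemma Zp_replW:
  assumes G: "G \<in> Zp m N" and a: "a' \<notin> Tset N G" and d: "a' = a + 1 \<or> a' = a - 1"
  shows "replW N G a a' \<in> Zp m N"
proof -
  have z: "G \<in> Zfun m N" using G by (simp add: Zp_def)
  have "replW N G a a' \<in> Zfun m N" using z by (auto simp: Zfun_def replW_def Iset_def)
  moreover have "\<forall>i j. i \<in> posI N \<longrightarrow> j \<in> posI N \<longrightarrow> i < j \<longrightarrow> replW N G a a' i < replW N G a a' j"
  proof (intro allI impI)
    fix i j assume ij: "i \<in> posI N" "j \<in> posI N" "i < j"
    have o: "G i < G j" using G ij by (simp add: Zp_def)
    have ni: "G i \<noteq> a'" "G j \<noteq> a'" using a ij by (auto simp: Tset_def)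
    show "replW N G a a' i < replW N G a a' j"
      using o ni d ij by (auto simp: replW_def)
  qed
  moreover have "\<forall>i j. i \<in> negI m \<longrightarrow> j \<in> negI m \<longrightarrow> i < j \<longrightarrow> replW N G a a' i > replW N G a a' j"
    using G negI_posI_disj by (auto simp: Zp_def replW_def)
  ultimately show ?thesis by (simp add: Zp_def)
qed

lemma sum_upd: fixes G :: "int \<Rightarrow> int" shows "finite I \<Longrightarrow> i0 \<in> I \<Longrightarrow> (\<Sum>i\<in>I. (G(i0 := v)) i) = (\<Sum>i\<in>I. G i) + (v - G i0)"
proof -
  assume f: "finite I" and i0: "i0 \<in> I"
  have "(\<Sum>i\<in>I. (G(i0 := v)) i) = (G(i0 := v)) i0 + (\<Sum>i\<in>I - {i0}. (G(i0 := v)) i)"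
    by (rule sum.remove[OF f i0])
  also have "(\<Sum>i\<in>I - {i0}. (G(i0 := v)) i) = (\<Sum>i\<in>I - {i0}. G i)" by (rule sum.cong) auto
  also have "(\<Sum>i\<in>I. G i) = G i0 + (\<Sum>i\<in>I - {i0}. G i)" using sum.remove[OF f i0] by simp
  ultimately show ?thesis by simp
qed

lemma replV_single:
  assumes G: "G \<in> Zp m N" and i0: "i0 \<in> negI m" "G i0 = a"
  shows "replV m G a a' = G(i0 := a')"
proof -
  have "inj_on G (negI m)" using Zp_inj_neg[OF G] .
  then show ?thesis using i0 unfolding replV_def by (auto simp: fun_eq_iff inj_on_def)
qed

lemma replW_single:
  assumes G: "G \<in> Zp m N" and i0: "i0 \<in> posI N" "G i0 = a"
  shows "replW N G a a' = G(i0 := a')"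
proof -
  have "inj_on G (posI N)" using Zp_inj_pos[OF G] .
  then show ?thesis using i0 unfolding replW_def by (auto simp: fun_eq_iff inj_on_def)
qed

lemma Tot_replV:
  assumes G: "G \<in> Zp m N" and a: "a \<in> Sset m G"
  shows "Tot m N (replV m G a a') = Tot m N G + (a' - a)"
proof -
  obtain i0 where i0: "i0 \<in> negI m" "G i0 = a" using a by (auto simp: Sset_def)
  have "i0 \<in> Iset m N" using i0 by (simp add: Iset_def)
  then show ?thesis unfolding Tot_def replV_single[OF G i0] using sum_upd[of "Iset m N" i0 G a'] i0 by simp
qed

lemma Tot_replW:
  assumes G: "G \<in> Zp m N" and a: "a \<in> Tset N G"
  shows "Tot m N (replW N G a a') = Tot m N G + (a' - a)"
proof -
  obtain i0 where i0: "i0 \<in> posI N" "G i0 = a" using a by (auto simp: Tset_def)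
  have "i0 \<in> Iset m N" using i0 by (simp add: Iset_def)
  then show ?thesis unfolding Tot_def replW_single[OF G i0] using sum_upd[of "Iset m N" i0 G a'] i0 by simp
qed

lemma sum_swapf:
  assumes f: "finite I" and ij: "i \<in> I" "j \<in> I"
  shows "(\<Sum>k\<in>I. swapf g i j k) = (\<Sum>k\<in>I. g k)"
proof (cases "i = j")
  case True then show ?thesis by (auto simp: swapf_def intro!: sum.cong)
next
  case False
  have "swapf g i j = (g(i := g j))(j := g i)" using False by (auto simp: swapf_def fun_eq_iff)
  moreover have "(\<Sum>k\<in>I. ((g(i := g j))(j := g i)) k) = (\<Sum>k\<in>I. g k)"
    using sum_upd[OF f ij(2), of "g(i := g j)" "g i"] sum_upd[OF f ij(1), of g "g j"] False by simp
  ultimately show ?thesis by simp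
qed

lemma sum_dvec: "finite I \<Longrightarrow> i \<in> I \<Longrightarrow> (\<Sum>k\<in>I. dvec i k) = - sgn i"
  unfolding dvec_def by simp

lemma bruhat_step_Tot:
  assumes "bruhat_step m N f g" shows "Tot m N g \<le> Tot m N f"
  using assms unfolding bruhat_step_def
proof (elim disjE exE conjE)
  fix i j assume i: "i \<in> negI m" and j: "j \<in> posI N" and g: "g = (\<lambda>k. f k - dvec i k + dvec j k)"
  have iI: "i \<in> Iset m N" and jI: "j \<in> Iset m N" using i j by (auto simp: Iset_def)
  have "Tot m N g = Tot m N f - (\<Sum>k\<in>Iset m N. dvec i k) + (\<Sum>k\<in>Iset m N. dvec j k)"
    unfolding g Tot_def by (simp add: sum.distrib sum_subtractf)
  also have "\<dots> = Tot m N f - 2"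
    using sum_dvec[OF finite_Iset iI] sum_dvec[OF finite_Iset jI] negI_neg[OF i] posI_pos[OF j] by simp
  finally show ?thesis by simp
next
  fix i j assume "i \<in> negI m" "j \<in> negI m" "g = swapf f i j"
  then show ?thesis unfolding Tot_def using sum_swapf[of "Iset m N" i j f] by (simp add: Iset_def)
next
  fix i j assume "i \<in> posI N" "j \<in> posI N" "g = swapf f i j"
  then show ?thesis unfolding Tot_def using sum_swapf[of "Iset m N" i j f] by (simp add: Iset_def)
qed

lemma bruhat_step_top:
  assumes "bruhat_step m N f g" "\<forall>k\<in>posI N. f k \<le> v" shows "\<forall>k\<in>posI N. g k \<le> v"
  using assms(1) unfolding bruhat_step_def
proof (elim disjE exE conjE)
  fix i j assume i: "i \<in> negI m" and j: "j \<in> posI N" and g: "g = (\<lambda>k. f k - dvec i k + dvec j k)"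
  show ?thesis
  proof
    fix k assume k: "k \<in> posI N"
    have "k \<noteq> i" using i k negI_posI_disj by blast
    then show "g k \<le> v" using assms(2) k posI_pos[OF j] by (auto simp: g dvec_def)
  qed
next
  fix i j assume "i \<in> negI m" "j \<in> negI m" "g = swapf f i j"
  then show ?thesis using assms(2) negI_posI_disj by (auto simp: swapf_def)
next
  fix i j assume "i \<in> posI N" "j \<in> posI N" "g = swapf f i j"
  then show ?thesis using assms(2) by (auto simp: swapf_def)
qed

lemma bruhat_Tot: "bruhat_gt m N f g \<Longrightarrow> Tot m N g \<le> Tot m N f"
  unfolding bruhat_gt_def
  by (induction rule: tranclp_induct) (auto dest: bruhat_step_Tot)

lemma bruhat_top: "bruhat_gt m N f g \<Longrightarrow> \<forall>k\<in>posI N. f k \<le> v \<Longrightarrow> \<forall>k\<in>posI N. g k \<le> v"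
  unfolding bruhat_gt_def
  by (induction rule: tranclp_induct) (auto dest: bruhat_step_top)

lemma typical_iff: "typical m N G \<longleftrightarrow> Sset m G \<inter> Tset N G = {}"
  by (simp add: typical_def Sset_def Tset_def)

lemma Iset_Suc: "Iset m (Suc n) = insert (int n + 1) (Iset m n)"
  by (auto simp: Iset_def posI_Suc)
lemma n1_notin_Iset: "int n + 1 \<notin> Iset m n"
  by (simp add: Iset_def not_posI_n1 n1_notin_negI)

lemma apx_Zp:
  assumes g: "g \<in> Zp m n" and c: "\<forall>i\<in>posI n. g i < c"
  shows "apx n g c \<in> Zp m (Suc n)"
proof -
  have "apx n g c \<in> Zfun m (Suc n)" using g by (auto simp: Zp_def Zfun_def apx_def Iset_Suc)
  moreover have "\<forall>i j. i \<in> negI m \<longrightarrow> j \<in> negI m \<longrightarrow> i < j \<longrightarrow> apx n g c i > apx n g c j"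
    using g n1_notin_negI by (auto simp: Zp_def apx_def)
  moreover have "\<forall>i j. i \<in> posI (Suc n) \<longrightarrow> j \<in> posI (Suc n) \<longrightarrow> i < j \<longrightarrow> apx n g c i < apx n g c j"
  proof (intro allI impI)
    fix i j assume ij: "i \<in> posI (Suc n)" "j \<in> posI (Suc n)" "i < j"
    show "apx n g c i < apx n g c j"
    proof (cases "j = int n + 1")
      case True
      then have "i \<in> posI n" using ij by (auto simp: posI_def)
      then show ?thesis using True c ij by (auto simp: apx_def)
    next
      case False
      then have "j \<in> posI n" "i \<in> posI n" using ij by (auto simp: posI_def)
      then show ?thesis using g ij by (auto simp: apx_def Zp_def posI_def)
    qed
  qed
  ultimately show ?thesis by (simp add: Zp_def)
qed

lemma Sset_apx: "Sset m (apx n g c) = Sset m g"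
proof -
  have "\<forall>i\<in>negI m. i \<noteq> int n + 1" using n1_notin_negI by blast
  then show ?thesis unfolding Sset_def apx_def by (intro image_cong) auto
qed

lemma Tset_apx: "Tset (Suc n) (apx n g c) = insert c (Tset n g)"
proof -
  have "Tset (Suc n) (apx n g c) = insert c ((apx n g c) ` posI n)"
    unfolding Tset_def posI_Suc by (simp add: apx_def fun_upd_same del: fun_upd_apply)
  also have "(apx n g c) ` posI n = g ` posI n"
    using not_posI_n1 unfolding apx_def by (intro image_cong) auto
  finally show ?thesis by (simp add: Tset_def)
qed

lemma replV_apx: "replV m (apx n g c) a a' = apx n (replV m g a a') c"
  using n1_notin_negI unfolding replV_def apx_def by (auto simp: fun_eq_iff)

lemma replW_apx: "a \<noteq> c \<Longrightarrow> replW (Suc n) (apx n g c) a a' = apx n (replW n g a a') c"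
  using not_posI_n1 unfolding replW_def apx_def by (auto simp: fun_eq_iff posI_Suc)

lemma replW_apx_top: "c \<notin> Tset n g \<Longrightarrow> replW (Suc n) (apx n g c) c a' = apx n g a'"
  using not_posI_n1 unfolding replW_def apx_def Tset_def by (auto simp: fun_eq_iff posI_Suc)

lemma Tot_apx: "g \<in> Zfun m n \<Longrightarrow> Tot m (Suc n) (apx n g c) = Tot m n g + c"
proof -
  assume "g \<in> Zfun m n"
  have "Tot m (Suc n) (apx n g c) = apx n g c (int n + 1) + (\<Sum>i\<in>Iset m n. apx n g c i)"
    unfolding Tot_def Iset_Suc using n1_notin_Iset by simp
  also have "(\<Sum>i\<in>Iset m n. apx n g c i) = Tot m n g"
    unfolding Tot_def apx_def using n1_notin_Iset by (intro sum.cong) auto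
  finally show ?thesis by (simp add: apx_def fun_upd_same del: fun_upd_apply)
qed

lemma apx_eq: "g \<in> Zfun m n \<Longrightarrow> x \<in> Zfun m n \<Longrightarrow> (apx n x c = apx n g c) \<longleftrightarrow> x = g"
proof
  assume g: "g \<in> Zfun m n" and x: "x \<in> Zfun m n" and e: "apx n x c = apx n g c"
  show "x = g"
  proof
    fix i show "x i = g i"
    proof (cases "i = int n + 1")
      case True then show ?thesis using g x n1_notin_Iset by (auto simp: Zfun_def)
    next
      case False then show ?thesis using fun_cong[OF e, of i] by (simp add: apx_def)
    qed
  qed
qed simp

lemma decomp_hi:
  assumes G: "G \<in> Zp m (Suc n)"
  shows "G(int n + 1 := 0) \<in> Zp m n" "apx n (G(int n + 1 := 0)) (G (int n + 1)) = G"
        "\<forall>i\<in>posI n. (G(int n + 1 := 0)) i < G (int n + 1)"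
proof -
  have n1: "int n + 1 \<in> posI (Suc n)" by (simp add: posI_def)
  show "G(int n + 1 := 0) \<in> Zp m n"
    using G n1_notin_negI not_posI_n1 unfolding Zp_def Zfun_def
    by (auto simp: Iset_Suc posI_Suc)
  show "apx n (G(int n + 1 := 0)) (G (int n + 1)) = G" by (simp add: apx_def)
  show "\<forall>i\<in>posI n. (G(int n + 1 := 0)) i < G (int n + 1)"
    using G n1 not_posI_n1 unfolding Zp_def by (auto simp: posI_Suc posI_def)
qed

lemma qpow_1: "qpow 1 = qvar" by (simp add: qpow_def)

lemma Kb_apply: "Kb f g = (if g = f then 1 else 0)" by (simp add: Kb_def)

lemma E_ident:
  assumes G: "G \<in> Zp m N" and t1: "a + 1 \<in> Tset N G" and t0: "a \<notin> Tset N G"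
  shows "Eop m N a (Kb (replW N G (a + 1) a)) =
         fs_add (Kb G) (fs_smult (if a + 1 \<in> Sset m G \<and> a \<notin> Sset m G then qvar else 0)
            (Kb (replV m (replW N G (a + 1) a) (a + 1) a)))"
proof
  fix Z
  define G1 where "G1 = replW N G (a + 1) a"
  define G2 where "G2 = replV m G1 (a + 1) a"
  have G1Z: "G1 \<in> Zp m N" unfolding G1_def by (rule Zp_replW[OF G t0]) simp
  have SG1: "Sset m G1 = Sset m G" by (simp add: G1_def Sset_replW)
  have TG1: "Tset N G1 = insert a (Tset N G - {a + 1})" by (simp add: G1_def Tset_replW t1)
  have i: "(Z \<in> Zp m N \<and> a + 1 \<in> Tset N Z \<and> a \<notin> Tset N Z \<and> replW N Z (a + 1) a = G1) \<longleftrightarrow> Z = G"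
  proof
    assume h: "Z \<in> Zp m N \<and> a + 1 \<in> Tset N Z \<and> a \<notin> Tset N Z \<and> replW N Z (a + 1) a = G1"
    then have "Z = replW N G1 a (a + 1)" using replW_inv[of a N Z "a+1"] by simp
    then show "Z = G" unfolding G1_def using replW_inv[OF t0] by simp
  qed (use G t1 t0 G1_def in auto)
  have ii: "(Z \<in> Zp m N \<and> a \<in> Sset m Z \<and> a + 1 \<notin> Sset m Z \<and> replV m Z a (a + 1) = G1) \<longleftrightarrow>
        (a + 1 \<in> Sset m G \<and> a \<notin> Sset m G \<and> Z = G2)"
  proof
    assume h: "Z \<in> Zp m N \<and> a \<in> Sset m Z \<and> a + 1 \<notin> Sset m Z \<and> replV m Z a (a + 1) = G1"
    then have "Sset m G1 = insert (a + 1) (Sset m Z - {a})" using Sset_replV[of a m Z "a+1"] by simp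
    moreover have "Z = G2" using h replV_inv[of "a+1" m Z a] by (simp add: G2_def)
    ultimately show "a + 1 \<in> Sset m G \<and> a \<notin> Sset m G \<and> Z = G2" using SG1 by auto
  next
    assume h: "a + 1 \<in> Sset m G \<and> a \<notin> Sset m G \<and> Z = G2"
    have "G2 \<in> Zp m N" unfolding G2_def by (rule Zp_replV[OF G1Z]) (use h SG1 in auto)
    moreover have "Sset m G2 = insert a (Sset m G - {a + 1})"
      unfolding G2_def using h SG1 Sset_replV[of "a+1" m G1 a] by simp
    moreover have "replV m G2 a (a + 1) = G1" unfolding G2_def using h SG1 replV_inv by simp
    ultimately show "Z \<in> Zp m N \<and> a \<in> Sset m Z \<and> a + 1 \<notin> Sset m Z \<and> replV m Z a (a + 1) = G1"
      using h by auto
  qed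
  have TG2: "Tset N G2 = Tset N G1" by (simp add: G2_def Tset_replV)
  have e: "ind (a \<in> Tset N G2) - ind (a + 1 \<in> Tset N G2) = 1" using TG2 TG1 by (simp add: ind_def)
  show "Eop m N a (Kb G1) Z = fs_add (Kb G) (fs_smult (if a + 1 \<in> Sset m G \<and> a \<notin> Sset m G then qvar else 0) (Kb G2)) Z"
  proof (cases "Z \<in> Zp m N")
    case False
    then have "Z \<noteq> G" "Z \<noteq> G2 \<or> \<not> (a + 1 \<in> Sset m G \<and> a \<notin> Sset m G)" using G ii by auto
    then show ?thesis using False by (auto simp: Eop_def fs_add_def fs_smult_def Kb_apply)
  next
    case True
    have A: "(if a + 1 \<in> Tset N Z \<and> a \<notin> Tset N Z then Kb G1 (replW N Z (a + 1) a) else 0) = Kb G Z"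
      using i True by (auto simp: Kb_apply)
    have B: "(if a \<in> Sset m Z \<and> a + 1 \<notin> Sset m Z
       then qpow (ind (a \<in> Tset N Z) - ind (a + 1 \<in> Tset N Z)) * Kb G1 (replV m Z a (a + 1)) else 0)
       = (if a + 1 \<in> Sset m G \<and> a \<notin> Sset m G then qvar else 0) * Kb G2 Z"
      using ii True e by (auto simp: Kb_apply qpow_1)
    show ?thesis using True A B by (simp add: Eop_def fs_add_def fs_smult_def)
  qed
qed

lemma F_ident:
  assumes G: "G \<in> Zp m N" and s1: "a + 1 \<in> Sset m G" and s0: "a \<notin> Sset m G" and t: "a \<in> Tset N G"
  shows "Fop m N a (Kb (replV m G (a + 1) a)) = Kb G"
proof
  fix Z
  define G3 where "G3 = replV m G (a + 1) a"
  have TG3: "Tset N G3 = Tset N G" by (simp add: G3_def Tset_replV)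
  have i: "(Z \<in> Zp m N \<and> a + 1 \<in> Sset m Z \<and> a \<notin> Sset m Z \<and> replV m Z (a + 1) a = G3) \<longleftrightarrow> Z = G"
  proof
    assume h: "Z \<in> Zp m N \<and> a + 1 \<in> Sset m Z \<and> a \<notin> Sset m Z \<and> replV m Z (a + 1) a = G3"
    then have "Z = replV m G3 a (a + 1)" using replV_inv[of a m Z "a+1"] by simp
    then show "Z = G" unfolding G3_def using replV_inv[OF s0] by simp
  qed (use G s1 s0 G3_def in auto)
  have ii: "\<not> (a \<in> Tset N Z \<and> a + 1 \<notin> Tset N Z \<and> replW N Z a (a + 1) = G3)"
  proof
    assume h: "a \<in> Tset N Z \<and> a + 1 \<notin> Tset N Z \<and> replW N Z a (a + 1) = G3"
    then have "Tset N G3 = insert (a + 1) (Tset N Z - {a})" using Tset_replW[of a N Z "a+1"] by simp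
    then show False using TG3 t by auto
  qed
  show "Fop m N a (Kb G3) Z = Kb G Z"
  proof (cases "Z \<in> Zp m N")
    case False
    then show ?thesis using G by (auto simp: Fop_def Kb_apply)
  next
    case True
    then show ?thesis using i ii by (auto simp: Fop_def Kb_apply)
  qed
qed

lemma Eop_apx:
  assumes x: "x \<in> Zp m n" and c: "\<forall>i\<in>posI n. x i < c" and a: "a \<noteq> c" "a + 1 \<noteq> c"
  shows "Eop m (Suc n) a y (apx n x c) = Eop m n a (\<lambda>z. y (apx n z c)) x"
  using apx_Zp[OF x c] x a
  by (simp add: Eop_def Tset_apx Sset_apx replW_apx replV_apx)

lemma Fop_apx:
  assumes x: "x \<in> Zp m n" and c: "\<forall>i\<in>posI n. x i < c" and a: "a \<noteq> c" "a + 1 \<noteq> c"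
  shows "Fop m (Suc n) a y (apx n x c) = Fop m n a (\<lambda>z. y (apx n z c)) x"
  using apx_Zp[OF x c] x a
  by (simp add: Fop_def Tset_apx Sset_apx replW_apx replV_apx)

lemma Tset_lt: "(\<forall>i\<in>posI n. x i < c) \<longleftrightarrow> (\<forall>t\<in>Tset n x. t < c)"
  by (auto simp: Tset_def)

lemma Eop_top:
  assumes x: "x \<in> Zp m n" and c: "\<forall>i\<in>posI n. x i < c" and y: "\<forall>z. y (apx n z c) = 0"
  shows "Eop m (Suc n) (c - 1) y (apx n x c) = (if c - 1 \<in> Tset n x then 0 else y (apx n x (c - 1)))"
proof -
  have cT: "c \<notin> Tset n x" using c by (auto simp: Tset_def)
  show ?thesis
    using apx_Zp[OF x c] cT y
    by (simp add: Eop_def Tset_apx Sset_apx replW_apx_top replV_apx)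
qed

lemma Fop_top:
  assumes x: "x \<in> Zp m n" and c: "\<forall>i\<in>posI n. x i < c"
  shows "Fop m (Suc n) (c - 1) y (apx n x c) =
     (if c \<in> Sset m x \<and> c - 1 \<notin> Sset m x then y (apx n (replV m x c (c - 1)) c) else 0)"
  using apx_Zp[OF x c]
  by (simp add: Fop_def Tset_apx Sset_apx replV_apx)

lemma Fop_lo_top:
  assumes x: "x \<in> Zp m n" and w: "\<forall>z. c \<in> Tset n z \<longrightarrow> w z = 0"
  shows "Fop m n (c - 1) w x =
     (if c \<in> Sset m x \<and> c - 1 \<notin> Sset m x then w (replV m x c (c - 1)) else 0)"
proof -
  have "c - 1 \<in> Tset n x \<Longrightarrow> w (replW n x (c - 1) c) = 0"
    using w Tset_replW[of "c-1" n x c] by auto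
  then show ?thesis using x by (auto simp: Fop_def)
qed

lemma Ehat_I:
  assumes "finite {f. u f \<noteq> 0}" "\<forall>f. u f \<noteq> 0 \<longrightarrow> f \<in> Zp m N"
  shows "u \<in> Ehat m N"
  using assms unfolding Ehat_def by (auto intro: finite_subset[OF _ assms(1)])

lemma Kb_Ehat: "f \<in> Zp m N \<Longrightarrow> Kb f \<in> Ehat m N"
  by (rule Ehat_I) (auto simp: Kb_apply)

lemma smult_Kb_Ehat: "c = 0 \<or> f \<in> Zp m N \<Longrightarrow> fs_smult c (Kb f) \<in> Ehat m N"
  by (rule Ehat_I) (auto simp: Kb_apply fs_smult_def)

lemma qbar_0: "qbar 0 = 0"
proof -
  let ?P = "\<lambda>(p::rat poly, r::rat poly). r \<noteq> 0 \<and> (0::qq) = Fract p r"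
  have "?P (0, 1)" by (simp add: fract_collapse)
  then have h: "?P (SOME x. ?P x)" by (rule someI)
  obtain p r where pr: "(SOME x. ?P x) = (p, r)" by (cases "SOME x. ?P x")
  then have r: "r \<noteq> 0" and e: "Fract p r = Fract 0 1" using h by (auto simp: fract_collapse)
  then have "p = 0" using eq_fract(1)[of r 1 p 0] by simp
  then show ?thesis unfolding qbar_def pr by (simp add: fract_collapse)
qed

locale barinv =
  fixes m N and psi :: "fsum \<Rightarrow> fsum"
  assumes B: "is_bar_involution m N psi"
begin

lemma psi_Ehat: "u \<in> Ehat m N \<Longrightarrow> psi u \<in> Ehat m N"
  using B by (simp add: is_bar_involution_def)
lemma psi_add: "u \<in> Ehat m N \<Longrightarrow> v \<in> Ehat m N \<Longrightarrow> psi (fs_add u v) = fs_add (psi u) (psi v)"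
  using B by (simp add: is_bar_involution_def)
lemma psi_smult: "u \<in> Ehat m N \<Longrightarrow> psi (fs_smult c u) = fs_smult (qbar c) (psi u)"
  using B by (simp add: is_bar_involution_def)
lemma psi_typ: "f \<in> Zp m N \<Longrightarrow> typical m N f \<Longrightarrow> psi (Kb f) = Kb f"
  using B by (simp add: is_bar_involution_def)
lemma psi_E: "u \<in> Ehat m N \<Longrightarrow> psi (Eop m N a u) = Eop m N a (psi u)"
  using B by (simp add: is_bar_involution_def)
lemma psi_F: "u \<in> Ehat m N \<Longrightarrow> psi (Fop m N a u) = Fop m N a (psi u)"
  using B by (simp add: is_bar_involution_def)
lemma psi_diag: "f \<in> Zp m N \<Longrightarrow> psi (Kb f) f = 1"
  using B by (simp add: is_bar_involution_def)
lemma psi_supp: "f \<in> Zp m N \<Longrightarrow> psi (Kb f) g \<noteq> 0 \<Longrightarrow> g = f \<or> bruhat_gt m N f g"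
  using B unfolding is_bar_involution_def by blast
lemma psi_cont: "continuous_fs m N psi"
  using B by (simp add: is_bar_involution_def)

lemma psi_Tot0: "f \<in> Zp m N \<Longrightarrow> Tot m N g > Tot m N f \<Longrightarrow> psi (Kb f) g = 0"
  using psi_supp bruhat_Tot by fastforce

lemma psi_top0:
  assumes f: "f \<in> Zp m N" and v: "\<forall>k\<in>posI N. f k \<le> v" and k: "k \<in> posI N" "g k > v"
  shows "psi (Kb f) g = 0"
proof (rule ccontr)
  assume "psi (Kb f) g \<noteq> 0"
  then have "g = f \<or> bruhat_gt m N f g" using psi_supp[OF f] by blast
  then have "\<forall>k\<in>posI N. g k \<le> v" using bruhat_top v by blast
  then show False using k by force
qed

lemma psi_E_rel:
  assumes G: "G \<in> Zp m N" and t1: "a + 1 \<in> Tset N G" and t0: "a \<notin> Tset N G"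
  shows "psi (Kb G) Z = Eop m N a (psi (Kb (replW N G (a + 1) a))) Z -
      (if a + 1 \<in> Sset m G \<and> a \<notin> Sset m G then qbar qvar * psi (Kb (replV m (replW N G (a + 1) a) (a + 1) a)) Z else 0)"
proof -
  define G1 where "G1 = replW N G (a + 1) a"
  define G2 where "G2 = replV m G1 (a + 1) a"
  define cf where "cf = (if a + 1 \<in> Sset m G \<and> a \<notin> Sset m G then qvar else 0)"
  have G1Z: "G1 \<in> Zp m N" unfolding G1_def by (rule Zp_replW[OF G t0]) simp
  have SG1: "Sset m G1 = Sset m G" by (simp add: G1_def Sset_replW)
  have id: "Eop m N a (Kb G1) = fs_add (Kb G) (fs_smult cf (Kb G2))"
    unfolding G1_def G2_def cf_def by (rule E_ident[OF G t1 t0])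
  have "psi (Eop m N a (Kb G1)) = Eop m N a (psi (Kb G1))" by (rule psi_E[OF Kb_Ehat[OF G1Z]])
  have sm: "psi (fs_smult cf (Kb G2)) Z = (if a + 1 \<in> Sset m G \<and> a \<notin> Sset m G then qbar qvar * psi (Kb G2) Z else 0)"
  proof (cases "a + 1 \<in> Sset m G \<and> a \<notin> Sset m G")
    case True
    have "G2 \<in> Zp m N" unfolding G2_def by (rule Zp_replV[OF G1Z]) (use True SG1 in auto)
    then show ?thesis using True psi_smult[OF Kb_Ehat] by (simp add: cf_def fs_smult_def)
  next
    case False
    have z: "(\<lambda>_. 0) \<in> Ehat m N" by (rule Ehat_I) auto
    have "cf = 0" using False by (auto simp: cf_def)
    then have "fs_smult cf (Kb G2) = (\<lambda>_. 0)" by (simp add: fs_smult_def)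
    moreover have "psi (\<lambda>_. 0) = (\<lambda>_. 0)"
      using psi_smult[OF z, of 0] by (simp add: fs_smult_def qbar_0 fun_eq_iff)
    ultimately show ?thesis using False by auto
  qed
  have "psi (fs_add (Kb G) (fs_smult cf (Kb G2))) = fs_add (psi (Kb G)) (psi (fs_smult cf (Kb G2)))"
  proof (rule psi_add[OF Kb_Ehat[OF G] smult_Kb_Ehat])
    show "cf = 0 \<or> G2 \<in> Zp m N"
    proof (cases "a + 1 \<in> Sset m G \<and> a \<notin> Sset m G")
      case True
      have "G2 \<in> Zp m N" unfolding G2_def by (rule Zp_replV[OF G1Z]) (use True SG1 in auto)
      then show ?thesis by simp
    qed (auto simp: cf_def)
  qed
  then have "Eop m N a (psi (Kb G1)) Z = psi (Kb G) Z + psi (fs_smult cf (Kb G2)) Z"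
    using \<open>psi (Eop m N a (Kb G1)) = _\<close> id by (metis fs_add_def)
  then show ?thesis using sm unfolding G1_def[symmetric] G2_def[symmetric] by simp
qed

lemma psi_F_rel:
  assumes G: "G \<in> Zp m N" and s1: "a + 1 \<in> Sset m G" and s0: "a \<notin> Sset m G" and t: "a \<in> Tset N G"
  shows "psi (Kb G) = Fop m N a (psi (Kb (replV m G (a + 1) a)))"
proof -
  have "replV m G (a + 1) a \<in> Zp m N" by (rule Zp_replV[OF G]) (use s0 in auto)
  then show ?thesis using psi_F[OF Kb_Ehat] F_ident[OF G s1 s0 t] by metis
qed

lemma psi_zero: "psi (\<lambda>_. 0) = (\<lambda>_. 0)"
proof -
  have z: "(\<lambda>_. 0) \<in> Ehat m N" by (rule Ehat_I) auto
  show ?thesis using psi_smult[OF z, of 0] by (simp add: fs_smult_def qbar_0 fun_eq_iff)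
qed

lemma psi_fin:
  assumes "finite A" "A \<subseteq> Zp m N"
  shows "psi (\<lambda>f. if f \<in> A then c f else 0) = (\<lambda>y. \<Sum>f\<in>A. qbar (c f) * psi (Kb f) y)"
  using assms
proof (induction A rule: finite_induct)
  case empty then show ?case using psi_zero by simp
next
  case (insert a A)
  have e: "(\<lambda>f. if f \<in> insert a A then c f else 0) = fs_add (\<lambda>f. if f \<in> A then c f else 0) (fs_smult (c a) (Kb a))"
    using insert(2) by (intro ext) (auto simp: fs_add_def fs_smult_def Kb_apply)
  have r: "(\<lambda>f. if f \<in> A then c f else 0) \<in> Ehat m N"
    by (rule Ehat_I) (use insert in \<open>auto intro: finite_subset[OF _ insert(1)]\<close>)
  have aZ: "a \<in> Zp m N" using insert by auto
  have "psi (\<lambda>f. if f \<in> insert a A then c f else 0) = fs_add (psi (\<lambda>f. if f \<in> A then c f else 0)) (psi (fs_smult (c a) (Kb a)))"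
    unfolding e by (rule psi_add[OF r smult_Kb_Ehat]) (use aZ in auto)
  also have "psi (fs_smult (c a) (Kb a)) = fs_smult (qbar (c a)) (psi (Kb a))" by (rule psi_smult[OF Kb_Ehat[OF aZ]])
  finally show ?case using insert by (auto simp: fun_eq_iff fs_add_def fs_smult_def)
qed

lemma psi_expand:
  assumes u: "u \<in> Ehat m N"
  shows "\<exists>D0. \<forall>D\<ge>D0. psi u y = (\<Sum>f\<in>{f. u f \<noteq> 0 \<and> (\<forall>i\<in>posI N. - int D \<le> f i)}. qbar (u f) * psi (Kb f) y)"
proof -
  define d where "d = nat (\<Sum>i\<in>posI N. \<bar>y i\<bar>)"
  have yd: "\<forall>i\<in>posI N. - int d \<le> y i"
  proof
    fix i assume i: "i \<in> posI N"
    have "\<bar>y i\<bar> \<le> (\<Sum>i\<in>posI N. \<bar>y i\<bar>)" by (rule member_le_sum) (use i in auto)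
    then show "- int d \<le> y i" unfolding d_def by linarith
  qed
  obtain d' where d': "\<forall>u\<in>Ehat m N. \<forall>v\<in>Ehat m N. fs_add u (fs_smult (-1) v) \<in> nbhd m N d' \<longrightarrow>
         fs_add (psi u) (fs_smult (-1) (psi v)) \<in> nbhd m N d"
    using psi_cont unfolding continuous_fs_def by blast
  have "\<forall>D\<ge>d'. psi u y = (\<Sum>f\<in>{f. u f \<noteq> 0 \<and> (\<forall>i\<in>posI N. - int D \<le> f i)}. qbar (u f) * psi (Kb f) y)"
  proof (intro allI impI)
    fix D assume D: "D \<ge> d'"
    define A where "A = {f. u f \<noteq> 0 \<and> (\<forall>i\<in>posI N. - int D \<le> f i)}"
    have Afin: "finite A" using u unfolding A_def Ehat_def by auto
    have AZ: "A \<subseteq> Zp m N" using u unfolding A_def Ehat_def by auto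
    define uD where "uD = (\<lambda>f. if f \<in> A then u f else 0)"
    have uDE: "uD \<in> Ehat m N" unfolding uD_def by (rule Ehat_I) (use Afin AZ in \<open>auto intro: finite_subset[OF _ Afin]\<close>)
    define df where "df = fs_add u (fs_smult (-1) uD)"
    have dfs: "\<forall>f. df f \<noteq> 0 \<longrightarrow> u f \<noteq> 0 \<and> f \<notin> A" by (auto simp: df_def fs_add_def fs_smult_def uD_def)
    have "df \<in> nbhd m N d'"
    proof -
      have "df \<in> Ehat m N" unfolding Ehat_def
      proof (intro CollectI conjI allI impI)
        fix f assume "f \<notin> Zp m N" then show "df f = 0" using dfs u unfolding Ehat_def by blast
      next
        fix dd :: nat
        have "finite {f. u f \<noteq> 0 \<and> (\<forall>i\<in>posI N. f i \<ge> - int dd)}" using u unfolding Ehat_def by blast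
        then show "finite {f. df f \<noteq> 0 \<and> (\<forall>i\<in>posI N. f i \<ge> - int dd)}"
          by (rule finite_subset[rotated]) (use dfs in auto)
      qed
      moreover have "\<forall>f. df f \<noteq> 0 \<longrightarrow> (\<exists>i\<in>posI N. f i < - int d')"
      proof (intro allI impI)
        fix f assume "df f \<noteq> 0"
        then have "u f \<noteq> 0" "f \<notin> A" using dfs by auto
        then obtain i where "i \<in> posI N" "f i < - int D" unfolding A_def by force
        then show "\<exists>i\<in>posI N. f i < - int d'" using D by force
      qed
      ultimately show ?thesis by (simp add: nbhd_def)
    qed
    then have "fs_add (psi u) (fs_smult (-1) (psi uD)) \<in> nbhd m N d"
      using d' u uDE unfolding df_def by blast
    then have "fs_add (psi u) (fs_smult (-1) (psi uD)) y = 0"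
      using yd unfolding nbhd_def by force
    then have "psi u y = psi uD y" by (simp add: fs_add_def fs_smult_def)
    also have "psi uD y = (\<Sum>f\<in>A. qbar (u f) * psi (Kb f) y)"
      unfolding uD_def psi_fin[OF Afin AZ] ..
    finally show "psi u y = (\<Sum>f\<in>{f. u f \<noteq> 0 \<and> (\<forall>i\<in>posI N. - int D \<le> f i)}. qbar (u f) * psi (Kb f) y)"
      unfolding A_def .
  qed
  then show ?thesis by blast
qed

end


lemma Eop_cong:
  assumes "a + 1 \<in> Tset N x \<Longrightarrow> a \<notin> Tset N x \<Longrightarrow> u (replW N x (a + 1) a) = v (replW N x (a + 1) a)"
      and "a \<in> Sset m x \<Longrightarrow> a + 1 \<notin> Sset m x \<Longrightarrow> u (replV m x a (a + 1)) = v (replV m x a (a + 1))"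
  shows "Eop m N a u x = Eop m N a v x"
  using assms by (simp add: Eop_def)

lemma Fop_cong:
  assumes "a + 1 \<in> Sset m x \<Longrightarrow> a \<notin> Sset m x \<Longrightarrow> u (replV m x (a + 1) a) = v (replV m x (a + 1) a)"
      and "a \<in> Tset N x \<Longrightarrow> a + 1 \<notin> Tset N x \<Longrightarrow> u (replW N x a (a + 1)) = v (replW N x a (a + 1))"
  shows "Fop m N a u x = Fop m N a v x"
  using assms by (simp add: Fop_def)

definition atypH :: "nat \<Rightarrow> nat \<Rightarrow> (int \<Rightarrow> int) \<Rightarrow> int \<Rightarrow> nat" where
  "atypH m n g c = card (Sset m g \<inter> insert c (Tset n g))"

definition potH :: "nat \<Rightarrow> nat \<Rightarrow> (int \<Rightarrow> int) \<Rightarrow> int \<Rightarrow> nat" where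
  "potH m n g c = nat (Min (Sset m g \<inter> insert c (Tset n g)) - Min (Sset m g \<union> insert c (Tset n g)))"

lemma pot_less:
  assumes "Min X' = b - 1" "U' = U" "b - 1 \<in> U" "finite U" "Min X = b"
  shows "nat (Min X' - Min U') < nat (Min X - Min U)"
proof -
  have "Min U \<le> b - 1" using Min_le[OF assms(4) assms(3)] .
  then show ?thesis using assms by simp
qed

lemma card_ins_rm: "finite X \<Longrightarrow> b \<in> X \<Longrightarrow> card (insert y (X - {b})) \<le> card X"
proof -
  assume f: "finite X" and b: "b \<in> X"
  have "card (insert y (X - {b})) \<le> Suc (card (X - {b}))" using f by (simp add: card_insert_if)
  moreover have "card (X - {b}) = card X - 1" using f b by (simp add: card_Diff_singleton)
  moreover have "card X > 0" using f b card_gt_0_iff by blast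
  ultimately show ?thesis by linarith
qed

lemma Tset_lt_iff: "(\<forall>i\<in>posI n. x i < c) \<longleftrightarrow> (\<forall>t\<in>Tset n x. t < c)"
  by (auto simp: Tset_def)

locale two = hi: barinv m "Suc n" psi_hi + lo: barinv m n psi_lo
  for m n psi_hi psi_lo
begin

lemma apx_Zfun: "g \<in> Zp m n \<Longrightarrow> g \<in> Zfun m n" by (simp add: Zp_def)

lemma Tot_zero:
  assumes g: "g \<in> Zp m n" and x: "x \<in> Zp m n" and gc: "\<forall>i\<in>posI n. g i < c" and xc: "\<forall>i\<in>posI n. x i < c"
    and t: "Tot m n x > Tot m n g"
  shows "psi_hi (Kb (apx n g c)) (apx n x c) = psi_lo (Kb g) x"
proof -
  have "psi_hi (Kb (apx n g c)) (apx n x c) = 0"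
    by (rule hi.psi_Tot0[OF apx_Zp[OF g gc]]) (use t Tot_apx apx_Zfun g x in auto)
  moreover have "psi_lo (Kb g) x = 0" by (rule lo.psi_Tot0[OF g t])
  ultimately show ?thesis by simp
qed


lemma main_claim:
  "g \<in> Zp m n \<Longrightarrow> x \<in> Zp m n \<Longrightarrow> \<forall>i\<in>posI n. g i < c \<Longrightarrow> \<forall>i\<in>posI n. x i < c \<Longrightarrow>
   psi_hi (Kb (apx n g c)) (apx n x c) = psi_lo (Kb g) x"
proof -
  define P where "P = (\<lambda>(g, x, c). g \<in> Zp m n \<longrightarrow> x \<in> Zp m n \<longrightarrow> (\<forall>i\<in>posI n. g i < c) \<longrightarrow>
      (\<forall>i\<in>posI n. x i < c) \<longrightarrow> psi_hi (Kb (apx n g c)) (apx n x c) = psi_lo (Kb g) x)"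
  define fs :: "((int \<Rightarrow> int) \<times> (int \<Rightarrow> int) \<times> int \<Rightarrow> nat) list" where
    "fs = [\<lambda>(g, x, c). atypH m n g c, \<lambda>(g, x, c). nat (Tot m n g - Tot m n x), \<lambda>(g, x, c). potH m n g c]"
  have "P t" for t
  proof (induction t rule: wf_induct_rule[OF wf_measures[of fs]])
    case (1 t)
    obtain g x c where t: "t = (g, x, c)" by (cases t)
    have IH: "\<And>g' z c'. ((g', z, c'), (g, x, c)) \<in> measures fs \<Longrightarrow> P (g', z, c')" using 1 t by blast
    show ?case unfolding t P_def prod.case
    proof (intro impI)
      assume g: "g \<in> Zp m n" and x: "x \<in> Zp m n" and gc: "\<forall>i\<in>posI n. g i < c" and xc: "\<forall>i\<in>posI n. x i < c"
      have gT: "\<forall>t\<in>Tset n g. t < c" and xT: "\<forall>t\<in>Tset n x. t < c" using gc xc by (auto simp: Tset_def)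
      have IH': "psi_hi (Kb (apx n g' c')) (apx n z c') = psi_lo (Kb g') z"
        if g': "g' \<in> Zp m n" and z: "z \<in> Zp m n" and g'c: "\<forall>t\<in>Tset n g'. t < c'" and zc: "\<forall>t\<in>Tset n z. t < c'"
          and le: "atypH m n g' c' \<le> atypH m n g c"
          and dis: "atypH m n g' c' < atypH m n g c \<or> Tot m n g' - Tot m n z < Tot m n g - Tot m n x \<or>
                 (Tot m n g' - Tot m n z = Tot m n g - Tot m n x \<and> potH m n g' c' < potH m n g c)"
        for g' z c'
      proof -
        have g'c2: "\<forall>i\<in>posI n. g' i < c'" and zc2: "\<forall>i\<in>posI n. z i < c'"
          using g'c zc by (auto simp: Tset_def)
        show ?thesis
        proof (cases "Tot m n z > Tot m n g'")
          case True then show ?thesis by (rule Tot_zero[OF g' z g'c2 zc2])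
        next
          case False
          have "((g', z, c'), (g, x, c)) \<in> measures fs"
            using dis le False unfolding fs_def by (auto simp: in_measures)
          then have "P (g', z, c')" by (rule IH)
          then show ?thesis using g' z g'c2 zc2 unfolding P_def by simp
        qed
      qed
      have Gz: "apx n g c \<in> Zp m (Suc n)" by (rule apx_Zp[OF g gc])
      have SG: "Sset m (apx n g c) = Sset m g" by (rule Sset_apx)
      have TG: "Tset (Suc n) (apx n g c) = insert c (Tset n g)" by (rule Tset_apx)
      have finX: "finite (Sset m g \<inter> insert c (Tset n g))" by simp
      have finU: "finite (Sset m g \<union> insert c (Tset n g))" by simp
      show "psi_hi (Kb (apx n g c)) (apx n x c) = psi_lo (Kb g) x"
      proof (cases "Sset m g \<inter> insert c (Tset n g) = {}")
        case True
        have th: "typical m (Suc n) (apx n g c)" using True by (simp add: typical_iff SG TG)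
        have tl: "typical m n g" using True by (auto simp: typical_iff)
        show ?thesis
          using hi.psi_typ[OF Gz th] lo.psi_typ[OF g tl] apx_eq[OF apx_Zfun[OF g] apx_Zfun[OF x]]
          by (simp add: Kb_apply)
      next
        case False
        define b where "b = Min (Sset m g \<inter> insert c (Tset n g))"
        have bin: "b \<in> Sset m g" "b \<in> insert c (Tset n g)" using Min_in[OF finX False] unfolding b_def by auto
        have bmin: "\<And>y. y \<in> Sset m g \<Longrightarrow> y \<in> insert c (Tset n g) \<Longrightarrow> b \<le> y"
          unfolding b_def using finX by (auto intro: Min_le)
        have bc: "b \<le> c" using bin(2) gT by auto
        show ?thesis
        proof (cases "b = c")
          case True
          have cS: "c \<in> Sset m g" using bin True by simp
          have STg: "Sset m g \<inter> Tset n g = {}"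
          proof (rule ccontr)
            assume "Sset m g \<inter> Tset n g \<noteq> {}"
            then obtain y where "y \<in> Sset m g" "y \<in> Tset n g" by blast
            then show False using bmin[of y] gT True by force
          qed
          have X1: "Sset m g \<inter> insert c (Tset n g) = {c}" using STg cS by auto
          have atyp1: "atypH m n g c = 1" unfolding atypH_def X1 by simp
          show ?thesis
          proof (cases "c - 1 \<in> Tset n g")
            case True
            have c1S: "c - 1 \<notin> Sset m g" using STg True by auto
            define g3 where "g3 = replV m g c (c - 1)"
            have g3Z: "g3 \<in> Zp m n" unfolding g3_def by (rule Zp_replV[OF g c1S]) simp
            have Tg3: "Tset n g3 = Tset n g" by (simp add: g3_def Tset_replV)
            have Sg3: "Sset m g3 = insert (c - 1) (Sset m g - {c})" by (simp add: g3_def Sset_replV[OF cS])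
            have g3c: "\<forall>t\<in>Tset n g3. t < c" using Tg3 gT by simp
            have Totg3: "Tot m n g3 = Tot m n g - 1" using Tot_replV[OF g cS] by (simp add: g3_def)
            have hrel: "psi_hi (Kb (apx n g c)) = Fop m (Suc n) (c - 1) (psi_hi (Kb (apx n g3 c)))"
              using hi.psi_F_rel[OF Gz, of "c - 1"] cS c1S True by (simp add: SG TG replV_apx g3_def)
            have hi_eq: "psi_hi (Kb (apx n g c)) (apx n x c) =
                (if c \<in> Sset m x \<and> c - 1 \<notin> Sset m x then psi_hi (Kb (apx n g3 c)) (apx n (replV m x c (c - 1)) c) else 0)"
              unfolding hrel by (rule Fop_top[OF x xc])
            have lrel: "psi_lo (Kb g) = Fop m n (c - 1) (psi_lo (Kb g3))"
              using lo.psi_F_rel[OF g, of "c - 1"] cS c1S True by (simp add: g3_def)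
            have w0: "\<forall>z. c \<in> Tset n z \<longrightarrow> psi_lo (Kb g3) z = 0"
            proof (intro allI impI)
              fix z assume "c \<in> Tset n z"
              then obtain k where k: "k \<in> posI n" "z k = c" by (auto simp: Tset_def)
              have "\<forall>k\<in>posI n. g3 k \<le> c - 1" using g3c by (auto simp: Tset_def)
              then show "psi_lo (Kb g3) z = 0" using lo.psi_top0[OF g3Z, of "c - 1" k z] k by simp
            qed
            have lo_eq: "psi_lo (Kb g) x = (if c \<in> Sset m x \<and> c - 1 \<notin> Sset m x then psi_lo (Kb g3) (replV m x c (c - 1)) else 0)"
              unfolding lrel by (rule Fop_lo_top[OF x w0])
            show ?thesis
            proof (cases "c \<in> Sset m x \<and> c - 1 \<notin> Sset m x")
              case True
              define x3 where "x3 = replV m x c (c - 1)"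
              have x3Z: "x3 \<in> Zp m n" unfolding x3_def by (rule Zp_replV[OF x]) (use True in auto)
              have x3c: "\<forall>t\<in>Tset n x3. t < c" using xT by (simp add: x3_def Tset_replV)
              have Totx3: "Tot m n x3 = Tot m n x - 1" using Tot_replV[OF x, of c "c - 1"] True by (simp add: x3_def)
              have X3: "Sset m g3 \<inter> insert c (Tset n g3) = {c - 1}" using Sg3 Tg3 STg True \<open>c - 1 \<in> Tset n g\<close> by auto
              have U3: "Sset m g3 \<union> insert c (Tset n g3) = Sset m g \<union> insert c (Tset n g)"
                using Sg3 Tg3 cS \<open>c - 1 \<in> Tset n g\<close> by auto
              have pl: "potH m n g3 c < potH m n g c"
                unfolding potH_def by (rule pot_less[where b = c]) (use X3 U3 X1 \<open>c - 1 \<in> Tset n g\<close> in auto)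
              have "psi_hi (Kb (apx n g3 c)) (apx n x3 c) = psi_lo (Kb g3) x3"
                by (rule IH'[OF g3Z x3Z g3c x3c]) (use X3 atyp1 Totg3 Totx3 pl in \<open>auto simp: atypH_def\<close>)
              then show ?thesis using hi_eq lo_eq True by (simp add: x3_def)
            next
              case False
              show ?thesis unfolding hi_eq lo_eq if_not_P[OF False] ..
            qed
          next
            case False
            have gc1: "\<forall>t\<in>Tset n g. t < c - 1"
            proof
              fix t assume "t \<in> Tset n g" then show "t < c - 1" using gT False by (cases "t = c - 1") auto
            qed
            have gc1': "\<forall>i\<in>posI n. g i < c - 1" using gc1 by (auto simp: Tset_def)
            have G1Z: "apx n g (c - 1) \<in> Zp m (Suc n)" by (rule apx_Zp[OF g gc1'])
            have cT: "c \<notin> Tset n g" using gT by auto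
            have top1: "\<forall>k\<in>posI (Suc n). apx n h (c - 1) k \<le> c - 1" if "\<forall>i\<in>posI n. h i < c - 1" for h
              using that by (auto simp: posI_Suc apx_def)
            have ctop: "\<exists>k\<in>posI (Suc n). apx n z c k > c - 1" for z
              by (rule bexI[of _ "int n + 1"]) (auto simp: posI_def apx_def)
            have hrel: "psi_hi (Kb (apx n g c)) (apx n x c) =
               Eop m (Suc n) (c - 1) (psi_hi (Kb (apx n g (c - 1)))) (apx n x c) -
               (if c \<in> Sset m g \<and> c - 1 \<notin> Sset m g then qbar qvar * psi_hi (Kb (apx n (replV m g c (c - 1)) (c - 1))) (apx n x c) else 0)"
              using hi.psi_E_rel[OF Gz, of "c - 1" "apx n x c"] False cT
              by (simp add: SG TG replW_apx_top replV_apx)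
            have sec0: "(if c \<in> Sset m g \<and> c - 1 \<notin> Sset m g then qbar qvar * psi_hi (Kb (apx n (replV m g c (c - 1)) (c - 1))) (apx n x c) else 0) = 0"
            proof (cases "c \<in> Sset m g \<and> c - 1 \<notin> Sset m g")
              case True
              have g2Z: "replV m g c (c - 1) \<in> Zp m n" by (rule Zp_replV[OF g]) (use True in auto)
              have g2c: "\<forall>i\<in>posI n. replV m g c (c - 1) i < c - 1" using gc1' negI_posI_disj by (auto simp: replV_def)
              obtain k where k: "k \<in> posI (Suc n)" "apx n x c k > c - 1" using ctop by blast
              have "psi_hi (Kb (apx n (replV m g c (c - 1)) (c - 1))) (apx n x c) = 0"
                by (rule hi.psi_top0[of "apx n (replV m g c (c - 1)) (c - 1)" "c - 1" k "apx n x c", OF apx_Zp[OF g2Z g2c] top1[OF g2c] k])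
              then show ?thesis by simp
            next
              case False
              show ?thesis unfolding if_not_P[OF False] ..
            qed
            have y0: "\<forall>z. psi_hi (Kb (apx n g (c - 1))) (apx n z c) = 0"
            proof
              fix z obtain k where k: "k \<in> posI (Suc n)" "apx n z c k > c - 1" using ctop by blast
              show "psi_hi (Kb (apx n g (c - 1))) (apx n z c) = 0"
                by (rule hi.psi_top0[of "apx n g (c - 1)" "c - 1" k "apx n z c", OF G1Z top1[OF gc1'] k])
            qed
            have hi_eq: "psi_hi (Kb (apx n g c)) (apx n x c) =
                (if c - 1 \<in> Tset n x then 0 else psi_hi (Kb (apx n g (c - 1))) (apx n x (c - 1)))"
              using hrel sec0 Eop_top[OF x xc y0] by simp
            show ?thesis
            proof (cases "c - 1 \<in> Tset n x")
              case True
              then obtain k where k: "k \<in> posI n" "x k = c - 1" by (auto simp: Tset_def)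
              have "\<forall>k\<in>posI n. g k \<le> c - 2" using gc1' by force
              then have "psi_lo (Kb g) x = 0" using lo.psi_top0[OF g, of "c - 2" k x] k by simp
              then show ?thesis using hi_eq True by simp
            next
              case False
              have xc1: "\<forall>t\<in>Tset n x. t < c - 1"
              proof
                fix t assume "t \<in> Tset n x" then show "t < c - 1" using xT False by (cases "t = c - 1") auto
              qed
              have "psi_hi (Kb (apx n g (c - 1))) (apx n x (c - 1)) = psi_lo (Kb g) x"
              proof (rule IH'[OF g x gc1 xc1])
                show "atypH m n g (c - 1) \<le> atypH m n g c"
                proof -
                  have "Sset m g \<inter> insert (c - 1) (Tset n g) \<subseteq> {c - 1}" using STg by auto
                  then have "card (Sset m g \<inter> insert (c - 1) (Tset n g)) \<le> card {c - 1}" by (rule card_mono[rotated]) simp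
                  then show ?thesis using atyp1 by (simp add: atypH_def)
                qed
                show "atypH m n g (c - 1) < atypH m n g c \<or> Tot m n g - Tot m n x < Tot m n g - Tot m n x \<or>
                      (Tot m n g - Tot m n x = Tot m n g - Tot m n x \<and> potH m n g (c - 1) < potH m n g c)"
                proof (cases "c - 1 \<in> Sset m g")
                  case True
                  have X3: "Sset m g \<inter> insert (c - 1) (Tset n g) = {c - 1}" using STg True by auto
                  have U3: "Sset m g \<union> insert (c - 1) (Tset n g) = Sset m g \<union> insert c (Tset n g)"
                    using cS True by auto
                  have "potH m n g (c - 1) < potH m n g c"
                    unfolding potH_def X3 U3 X1 by (rule pot_less[where b = c]) (use True in auto)
                  then show ?thesis by simp
                next
                  case False
                  have "Sset m g \<inter> insert (c - 1) (Tset n g) = {}" using STg False by auto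
                  then show ?thesis using atyp1 by (simp add: atypH_def)
                qed
              qed
              then show ?thesis using hi_eq False by simp
            qed
          qed
        next
          case False
          have bc': "b < c" using False bc by simp
          have bT: "b \<in> Tset n g" using bin(2) False by simp
          have bS: "b \<in> Sset m g" using bin(1) .
          have bc1: "b - 1 \<noteq> c" "b - 1 + 1 \<noteq> c" using bc' by auto
          have bT': "b \<in> insert c (Tset n g)" using bT by simp
          show ?thesis
          proof (cases "b - 1 \<in> Tset n g")
            case True
            have b1S: "b - 1 \<notin> Sset m g" using bmin[of "b - 1"] True by force
            define g3 where "g3 = replV m g b (b - 1)"
            have g3Z: "g3 \<in> Zp m n" unfolding g3_def by (rule Zp_replV[OF g b1S]) simp
            have Tg3: "Tset n g3 = Tset n g" by (simp add: g3_def Tset_replV)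
            have Sg3: "Sset m g3 = insert (b - 1) (Sset m g - {b})" by (simp add: g3_def Sset_replV[OF bS])
            have g3c: "\<forall>t\<in>Tset n g3. t < c" using Tg3 gT by simp
            have Totg3: "Tot m n g3 = Tot m n g - 1" using Tot_replV[OF g bS] by (simp add: g3_def)
            have X3: "Sset m g3 \<inter> insert c (Tset n g3) = insert (b - 1) ((Sset m g \<inter> insert c (Tset n g)) - {b})"
              using Sg3 Tg3 True by auto
            have atle: "atypH m n g3 c \<le> atypH m n g c"
              unfolding atypH_def X3 by (rule card_ins_rm) (use bin in auto)
            have hrel: "psi_hi (Kb (apx n g c)) = Fop m (Suc n) (b - 1) (psi_hi (Kb (apx n g3 c)))"
              using hi.psi_F_rel[OF Gz, of "b - 1"] bS b1S True by (simp add: SG TG replV_apx g3_def)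
            have hi_eq: "psi_hi (Kb (apx n g c)) (apx n x c) = Fop m n (b - 1) (\<lambda>z. psi_hi (Kb (apx n g3 c)) (apx n z c)) x"
              unfolding hrel by (rule Fop_apx[OF x xc bc1])
            have lrel: "psi_lo (Kb g) = Fop m n (b - 1) (psi_lo (Kb g3))"
              using lo.psi_F_rel[OF g, of "b - 1"] bS b1S True by (simp add: g3_def)
            show ?thesis unfolding hi_eq lrel
            proof (rule Fop_cong)
              assume a1: "b - 1 + 1 \<in> Sset m x" and a2: "b - 1 \<notin> Sset m x"
              define z where "z = replV m x b (b - 1)"
              have zZ: "z \<in> Zp m n" unfolding z_def by (rule Zp_replV[OF x]) (use a2 in auto)
              have zc: "\<forall>t\<in>Tset n z. t < c" using xT by (simp add: z_def Tset_replV)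
              have Totz: "Tot m n z = Tot m n x - 1" using Tot_replV[OF x, of b "b - 1"] a1 by (simp add: z_def)
              have Xm: "Min (insert (b - 1) ((Sset m g \<inter> insert c (Tset n g)) - {b})) = b - 1"
              proof (rule Min_eqI)
                fix y assume "y \<in> insert (b - 1) ((Sset m g \<inter> insert c (Tset n g)) - {b})"
                then show "b - 1 \<le> y" using bmin by fastforce
              qed auto
              have U3: "Sset m g3 \<union> insert c (Tset n g3) = Sset m g \<union> insert c (Tset n g)"
                using Sg3 Tg3 bT True by auto
              have pl: "potH m n g3 c < potH m n g c"
                unfolding potH_def X3 U3 by (rule pot_less[where b = b]) (use Xm True b_def in auto)
              have "psi_hi (Kb (apx n g3 c)) (apx n z c) = psi_lo (Kb g3) z"
                by (rule IH'[OF g3Z zZ g3c zc atle]) (use Totg3 Totz pl in auto)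
              then show "psi_hi (Kb (apx n g3 c)) (apx n (replV m x (b - 1 + 1) (b - 1)) c) = psi_lo (Kb g3) (replV m x (b - 1 + 1) (b - 1))"
                by (simp add: z_def)
            next
              assume a1: "b - 1 \<in> Tset n x" and a2: "b - 1 + 1 \<notin> Tset n x"
              define z where "z = replW n x (b - 1) b"
              have zZ: "z \<in> Zp m n" unfolding z_def by (rule Zp_replW[OF x]) (use a2 in auto)
              have zc: "\<forall>t\<in>Tset n z. t < c" using xT bc' a1 by (auto simp: z_def Tset_replW)
              have Totz: "Tot m n z = Tot m n x + 1" using Tot_replW[OF x a1, of b] by (simp add: z_def)
              have "psi_hi (Kb (apx n g3 c)) (apx n z c) = psi_lo (Kb g3) z"
                by (rule IH'[OF g3Z zZ g3c zc atle]) (use Totg3 Totz in auto)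
              then show "psi_hi (Kb (apx n g3 c)) (apx n (replW n x (b - 1) (b - 1 + 1)) c) = psi_lo (Kb g3) (replW n x (b - 1) (b - 1 + 1))"
                by (simp add: z_def)
            qed
          next
            case False
            have b1T: "b - 1 \<notin> insert c (Tset n g)" using False bc1 by simp
            define g1 where "g1 = replW n g b (b - 1)"
            have g1Z: "g1 \<in> Zp m n" unfolding g1_def by (rule Zp_replW[OF g False]) simp
            have Tg1: "Tset n g1 = insert (b - 1) (Tset n g - {b})" by (simp add: g1_def Tset_replW[OF bT])
            have Sg1: "Sset m g1 = Sset m g" by (simp add: g1_def Sset_replW)
            have g1c: "\<forall>t\<in>Tset n g1. t < c" using Tg1 gT bc' by auto
            have Totg1: "Tot m n g1 = Tot m n g - 1" using Tot_replW[OF g bT] by (simp add: g1_def)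
            have TG1: "insert c (Tset n g1) = insert (b - 1) (insert c (Tset n g) - {b})" using Tg1 False bc' by auto
            have atle: "atypH m n g1 c \<le> atypH m n g c"
            proof -
              have "Sset m g1 \<inter> insert c (Tset n g1) \<subseteq> insert (b - 1) ((Sset m g \<inter> insert c (Tset n g)) - {b})"
                using Sg1 TG1 by auto
              then have "card (Sset m g1 \<inter> insert c (Tset n g1)) \<le> card (insert (b - 1) ((Sset m g \<inter> insert c (Tset n g)) - {b}))"
                by (rule card_mono[rotated]) simp
              also have "\<dots> \<le> card (Sset m g \<inter> insert c (Tset n g))" by (rule card_ins_rm) (use bin in auto)
              finally show ?thesis by (simp add: atypH_def)
            qed
            have hrel: "psi_hi (Kb (apx n g c)) (apx n x c) =
               Eop m (Suc n) (b - 1) (psi_hi (Kb (apx n g1 c))) (apx n x c) -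
               (if b \<in> Sset m g \<and> b - 1 \<notin> Sset m g then qbar qvar * psi_hi (Kb (apx n (replV m g1 b (b - 1)) c)) (apx n x c) else 0)"
              using hi.psi_E_rel[OF Gz, of "b - 1" "apx n x c"] b1T bT' bc'
              by (simp add: SG TG replW_apx replV_apx g1_def)
            have hi_eq: "psi_hi (Kb (apx n g c)) (apx n x c) =
               Eop m n (b - 1) (\<lambda>z. psi_hi (Kb (apx n g1 c)) (apx n z c)) x -
               (if b \<in> Sset m g \<and> b - 1 \<notin> Sset m g then qbar qvar * psi_hi (Kb (apx n (replV m g1 b (b - 1)) c)) (apx n x c) else 0)"
              using hrel Eop_apx[OF x xc bc1] by simp
            have lo_eq: "psi_lo (Kb g) x =
               Eop m n (b - 1) (psi_lo (Kb g1)) x -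
               (if b \<in> Sset m g \<and> b - 1 \<notin> Sset m g then qbar qvar * psi_lo (Kb (replV m g1 b (b - 1))) x else 0)"
              using lo.psi_E_rel[OF g, of "b - 1" x] bT False by (simp add: g1_def)
            have first: "Eop m n (b - 1) (\<lambda>z. psi_hi (Kb (apx n g1 c)) (apx n z c)) x = Eop m n (b - 1) (psi_lo (Kb g1)) x"
            proof (rule Eop_cong)
              assume a1: "b - 1 + 1 \<in> Tset n x" and a2: "b - 1 \<notin> Tset n x"
              define z where "z = replW n x b (b - 1)"
              have a1': "b \<in> Tset n x" using a1 by simp
              have zZ: "z \<in> Zp m n" unfolding z_def by (rule Zp_replW[OF x a2]) simp
              have zc: "\<forall>t\<in>Tset n z. t < c" using xT bc' a1' by (auto simp: z_def Tset_replW)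
              have Totz: "Tot m n z = Tot m n x - 1" using Tot_replW[OF x a1', of "b - 1"] by (simp add: z_def)
              have "psi_hi (Kb (apx n g1 c)) (apx n z c) = psi_lo (Kb g1) z"
              proof (rule IH'[OF g1Z zZ g1c zc atle])
                show "atypH m n g1 c < atypH m n g c \<or> Tot m n g1 - Tot m n z < Tot m n g - Tot m n x \<or>
                  (Tot m n g1 - Tot m n z = Tot m n g - Tot m n x \<and> potH m n g1 c < potH m n g c)"
                proof (cases "b - 1 \<in> Sset m g")
                  case True
                  have X1: "Sset m g1 \<inter> insert c (Tset n g1) = insert (b - 1) ((Sset m g \<inter> insert c (Tset n g)) - {b})"
                    using Sg1 TG1 True by auto
                  have Xm: "Min (insert (b - 1) ((Sset m g \<inter> insert c (Tset n g)) - {b})) = b - 1"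
                  proof (rule Min_eqI)
                    fix y assume "y \<in> insert (b - 1) ((Sset m g \<inter> insert c (Tset n g)) - {b})"
                    then show "b - 1 \<le> y" using bmin by fastforce
                  qed auto
                  have U1: "Sset m g1 \<union> insert c (Tset n g1) = Sset m g \<union> insert c (Tset n g)"
                    using Sg1 TG1 bS True by auto
                  have "potH m n g1 c < potH m n g c"
                    unfolding potH_def X1 U1 by (rule pot_less[where b = b]) (use Xm True b_def in auto)
                  then show ?thesis using Totg1 Totz by simp
                next
                  case False
                  have X1: "Sset m g1 \<inter> insert c (Tset n g1) = (Sset m g \<inter> insert c (Tset n g)) - {b}"
                    using Sg1 TG1 False by auto
                  have "card ((Sset m g \<inter> insert c (Tset n g)) - {b}) < card (Sset m g \<inter> insert c (Tset n g))"
                    by (rule card_Diff1_less) (use bin in auto)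
                  then show ?thesis unfolding atypH_def X1 by simp
                qed
              qed
              then show "psi_hi (Kb (apx n g1 c)) (apx n (replW n x (b - 1 + 1) (b - 1)) c) = psi_lo (Kb g1) (replW n x (b - 1 + 1) (b - 1))"
                by (simp add: z_def)
            next
              assume a1: "b - 1 \<in> Sset m x" and a2: "b - 1 + 1 \<notin> Sset m x"
              define z where "z = replV m x (b - 1) b"
              have zZ: "z \<in> Zp m n" unfolding z_def by (rule Zp_replV[OF x]) (use a2 in auto)
              have zc: "\<forall>t\<in>Tset n z. t < c" using xT by (simp add: z_def Tset_replV)
              have Totz: "Tot m n z = Tot m n x + 1" using Tot_replV[OF x a1, of b] by (simp add: z_def)
              have "psi_hi (Kb (apx n g1 c)) (apx n z c) = psi_lo (Kb g1) z"
                by (rule IH'[OF g1Z zZ g1c zc atle]) (use Totg1 Totz in auto)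
              then show "psi_hi (Kb (apx n g1 c)) (apx n (replV m x (b - 1) (b - 1 + 1)) c) = psi_lo (Kb g1) (replV m x (b - 1) (b - 1 + 1))"
                by (simp add: z_def)
            qed
            have second: "(if b \<in> Sset m g \<and> b - 1 \<notin> Sset m g then qbar qvar * psi_hi (Kb (apx n (replV m g1 b (b - 1)) c)) (apx n x c) else 0) =
                (if b \<in> Sset m g \<and> b - 1 \<notin> Sset m g then qbar qvar * psi_lo (Kb (replV m g1 b (b - 1))) x else 0)"
            proof (cases "b \<in> Sset m g \<and> b - 1 \<notin> Sset m g")
              case True
              define g2 where "g2 = replV m g1 b (b - 1)"
              have g2Z: "g2 \<in> Zp m n" unfolding g2_def by (rule Zp_replV[OF g1Z]) (use True Sg1 in auto)
              have Tg2: "Tset n g2 = Tset n g1" by (simp add: g2_def Tset_replV)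
              have Sg2: "Sset m g2 = insert (b - 1) (Sset m g - {b})" using True Sg1 by (simp add: g2_def Sset_replV)
              have g2c: "\<forall>t\<in>Tset n g2. t < c" using Tg2 g1c by simp
              have Totg2: "Tot m n g2 = Tot m n g - 2" using Tot_replV[OF g1Z, of b "b - 1"] True Sg1 Totg1 by (simp add: g2_def)
              have atle2: "atypH m n g2 c \<le> atypH m n g c"
              proof -
                have "Sset m g2 \<inter> insert c (Tset n g2) \<subseteq> insert (b - 1) ((Sset m g \<inter> insert c (Tset n g)) - {b})"
                  using Sg2 Tg2 TG1 by auto
                then have "card (Sset m g2 \<inter> insert c (Tset n g2)) \<le> card (insert (b - 1) ((Sset m g \<inter> insert c (Tset n g)) - {b}))"
                  by (rule card_mono[rotated]) simp
                also have "\<dots> \<le> card (Sset m g \<inter> insert c (Tset n g))" by (rule card_ins_rm) (use bin in auto)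
                finally show ?thesis by (simp add: atypH_def)
              qed
              have "psi_hi (Kb (apx n g2 c)) (apx n x c) = psi_lo (Kb g2) x"
                by (rule IH'[OF g2Z x g2c xT atle2]) (use Totg2 in auto)
              then show ?thesis by (simp add: g2_def)
            next
              case False
              show ?thesis unfolding if_not_P[OF False] ..
            qed
            show ?thesis using hi_eq lo_eq first second by simp
          qed
        qed
      qed
    qed
  qed
  then show "g \<in> Zp m n \<Longrightarrow> x \<in> Zp m n \<Longrightarrow> \<forall>i\<in>posI n. g i < c \<Longrightarrow> \<forall>i\<in>posI n. x i < c \<Longrightarrow>
   psi_hi (Kb (apx n g c)) (apx n x c) = psi_lo (Kb g) x" unfolding P_def by auto
qed

end


lemma Zp_mono_pos: "f \<in> Zp m n \<Longrightarrow> i \<in> posI n \<Longrightarrow> f i \<le> f (int n)"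
proof -
  assume f: "f \<in> Zp m n" and i: "i \<in> posI n"
  show ?thesis
  proof (cases "i = int n")
    case False
    then have "i < int n" "int n \<in> posI n" using i by (auto simp: posI_def)
    then show ?thesis using f i unfolding Zp_def by force
  qed simp
qed

theorem proposition2p8:
  fixes m n :: nat
    and psi_hi psi_lo :: "fsum \<Rightarrow> fsum"
  assumes "is_bar_involution m (Suc n) psi_hi"
    and "is_bar_involution m n psi_lo"
    and "u \<in> Ehatp m (Suc n)"
  shows "truncation m n (psi_hi u) = psi_lo (truncation m n u)"
proof -
  interpret two m n psi_hi psi_lo
    by (rule two.intro) (simp_all add: barinv_def assms(1,2))
  have uE: "u \<in> Ehat m (Suc n)" and uZ: "\<forall>f. f \<notin> Zpp m (Suc n) \<longrightarrow> u f = 0"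
    using assms(3) by (auto simp: Ehatp_def)
  define c0 :: int where "c0 = int n + 1"
  define h where "h = (\<lambda>f. apx n f c0)"
  define Tu where "Tu = truncation m n u"
  have Tu_eq: "Tu f = (if f \<in> Zpp m n then u (h f) else 0)" for f
    by (simp add: Tu_def truncation_def h_def apx_def c0_def)
  have injh: "inj_on h (Zfun m n)" unfolding h_def inj_on_def using apx_eq by blast
  have Zpp_Zp: "f \<in> Zpp m N \<Longrightarrow> f \<in> Zp m N" for f N by (simp add: Zpp_def)
  have Zpp_lt: "\<forall>i\<in>posI n. f i < c0" if "f \<in> Zpp m n" for f
  proof
    fix i assume i: "i \<in> posI n"
    have "f i \<le> f (int n)" by (rule Zp_mono_pos[OF Zpp_Zp[OF that] i])
    moreover have "f (int n) \<le> int n" using that by (simp add: Zpp_def)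
    ultimately show "f i < c0" by (simp add: c0_def)
  qed
  have TuE: "Tu \<in> Ehat m n" unfolding Ehat_def
  proof (intro CollectI conjI allI impI)
    fix f assume "f \<notin> Zp m n" then show "Tu f = 0" using Zpp_Zp by (auto simp: Tu_eq)
  next
    fix d :: nat
    have fin: "finite {f. u f \<noteq> 0 \<and> (\<forall>i\<in>posI (Suc n). f i \<ge> - int d)}" using uE by (simp add: Ehat_def)
    have "{f. Tu f \<noteq> 0 \<and> (\<forall>i\<in>posI n. f i \<ge> - int d)} \<subseteq> h -` {f. u f \<noteq> 0 \<and> (\<forall>i\<in>posI (Suc n). f i \<ge> - int d)} \<inter> Zfun m n"
    proof
      fix f assume f: "f \<in> {f. Tu f \<noteq> 0 \<and> (\<forall>i\<in>posI n. f i \<ge> - int d)}"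
      then have fZ: "f \<in> Zpp m n" and uf: "u (h f) \<noteq> 0" by (auto simp: Tu_eq split: if_splits)
      have "\<forall>i\<in>posI (Suc n). h f i \<ge> - int d" using f not_posI_n1 by (auto simp: posI_Suc h_def apx_def c0_def)
      then show "f \<in> h -` {f. u f \<noteq> 0 \<and> (\<forall>i\<in>posI (Suc n). f i \<ge> - int d)} \<inter> Zfun m n"
        using uf fZ by (auto simp: Zpp_def Zp_def)
    qed
    moreover have "finite (h -` {f. u f \<noteq> 0 \<and> (\<forall>i\<in>posI (Suc n). f i \<ge> - int d)} \<inter> Zfun m n)"
      by (rule finite_vimage_IntI[OF fin injh])
    ultimately show "finite {f. Tu f \<noteq> 0 \<and> (\<forall>i\<in>posI n. f i \<ge> - int d)}" by (rule finite_subset)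
  qed
  have c0pos: "c0 \<in> posI (Suc n)" by (simp add: c0_def posI_def)
  show ?thesis
  proof
    fix y
    show "truncation m n (psi_hi u) y = psi_lo (truncation m n u) y"
    proof (cases "y \<in> Zpp m n")
      case True
      have yZ: "y \<in> Zp m n" using True Zpp_Zp by blast
      have yc: "\<forall>i\<in>posI n. y i < c0" using Zpp_lt[OF True] .
      have L: "truncation m n (psi_hi u) y = psi_hi u (h y)"
        using True by (simp add: truncation_def h_def apx_def c0_def)
      obtain D1 where D1: "\<forall>D\<ge>D1. psi_hi u (h y) = (\<Sum>f\<in>{f. u f \<noteq> 0 \<and> (\<forall>i\<in>posI (Suc n). - int D \<le> f i)}. qbar (u f) * psi_hi (Kb f) (h y))"
        using hi.psi_expand[OF uE] by blast
      obtain D2 where D2: "\<forall>D\<ge>D2. psi_lo Tu y = (\<Sum>f\<in>{f. Tu f \<noteq> 0 \<and> (\<forall>i\<in>posI n. - int D \<le> f i)}. qbar (Tu f) * psi_lo (Kb f) y)"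
        using lo.psi_expand[OF TuE] by blast
      define D where "D = max D1 D2"
      define A where "A = {f. u f \<noteq> 0 \<and> (\<forall>i\<in>posI (Suc n). - int D \<le> f i)}"
      define A' where "A' = {f. Tu f \<noteq> 0 \<and> (\<forall>i\<in>posI n. - int D \<le> f i)}"
      have finA: "finite A" using uE by (simp add: A_def Ehat_def)
      have hA: "h ` A' \<subseteq> A"
      proof
        fix f assume "f \<in> h ` A'"
        then obtain f' where f': "f' \<in> A'" "f = h f'" by blast
        then have fZ: "f' \<in> Zpp m n" and uf: "u (h f') \<noteq> 0" by (auto simp: A'_def Tu_eq split: if_splits)
        have "\<forall>i\<in>posI (Suc n). h f' i \<ge> - int D" using f' not_posI_n1 by (auto simp: A'_def posI_Suc h_def apx_def c0_def)
        then show "f \<in> A" using uf f' by (simp add: A_def)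
      qed
      have injA': "inj_on h A'"
        by (rule inj_on_subset[OF injh]) (auto simp: A'_def Tu_eq Zpp_def Zp_def split: if_splits)
      have zero: "qbar (u f) * psi_hi (Kb f) (h y) = 0" if f: "f \<in> A - h ` A'" for f
      proof -
        have uf: "u f \<noteq> 0" using f by (simp add: A_def)
        then have fZ: "f \<in> Zpp m (Suc n)" using uZ by blast
        have fZp: "f \<in> Zp m (Suc n)" using fZ Zpp_Zp by blast
        have top: "f c0 \<le> c0" using fZ by (simp add: Zpp_def c0_def add.commute)
        have "f c0 \<noteq> c0"
        proof
          assume e: "f c0 = c0"
          define f' where "f' = f(c0 := 0)"
          have f'Z: "f' \<in> Zp m n" unfolding f'_def c0_def by (rule decomp_hi(1)[OF fZp])
          have hf': "h f' = f" by (simp add: h_def f'_def apx_def c0_def e[unfolded c0_def] fun_eq_iff)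
          have f'lt: "\<forall>i\<in>posI n. f' i < c0" using decomp_hi(3)[OF fZp] e by (simp add: f'_def c0_def)
          have f'pp: "f' \<in> Zpp m n"
          proof (cases "n = 0")
            case True
            have "f' \<in> Zfun m n" using f'Z by (simp add: Zp_def)
            then have "f' 0 = 0" using True by (auto simp: Zfun_def Iset_def posI_def negI_def)
            then show ?thesis using f'Z True by (simp add: Zpp_def)
          next
            case False
            then have "int n \<in> posI n" by (simp add: posI_def)
            then show ?thesis using f'Z f'lt by (auto simp: Zpp_def c0_def)
          qed
          have "f' \<in> A'"
          proof -
            have "Tu f' \<noteq> 0" using f'pp uf hf' by (simp add: Tu_eq)
            moreover have "\<forall>i\<in>posI n. - int D \<le> f' i"
              using f not_posI_n1 by (auto simp: A_def posI_Suc f'_def c0_def)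
            ultimately show ?thesis by (simp add: A'_def)
          qed
          then show False using f hf' by force
        qed
        then have lt: "f c0 \<le> int n" using top by (simp add: c0_def)
        have v: "\<forall>k\<in>posI (Suc n). f k \<le> int n"
        proof
          fix k assume k: "k \<in> posI (Suc n)"
          have "f k \<le> f (int (Suc n))" by (rule Zp_mono_pos[OF fZp k])
          then show "f k \<le> int n" using lt by (simp add: c0_def add.commute)
        qed
        have "h y c0 > int n" by (simp add: h_def apx_def c0_def)
        then have "psi_hi (Kb f) (h y) = 0" by (rule hi.psi_top0[of f "int n" c0 "h y", OF fZp v c0pos])
        then show ?thesis by simp
      qed
      have "psi_hi u (h y) = (\<Sum>f\<in>A. qbar (u f) * psi_hi (Kb f) (h y))"
        using D1 unfolding A_def D_def by simp
      also have "\<dots> = (\<Sum>f\<in>h ` A'. qbar (u f) * psi_hi (Kb f) (h y))"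
        by (rule sum.mono_neutral_cong_right[OF finA hA]) (use zero in auto)
      also have "\<dots> = (\<Sum>f'\<in>A'. qbar (u (h f')) * psi_hi (Kb (h f')) (h y))"
        by (rule sum.reindex[OF injA', unfolded comp_def])
      also have "\<dots> = (\<Sum>f'\<in>A'. qbar (Tu f') * psi_lo (Kb f') y)"
      proof (rule sum.cong[OF refl])
        fix f' assume f': "f' \<in> A'"
        then have fZ: "f' \<in> Zpp m n" by (auto simp: A'_def Tu_eq split: if_splits)
        have "psi_hi (Kb (h f')) (h y) = psi_lo (Kb f') y"
          unfolding h_def by (rule main_claim[OF Zpp_Zp[OF fZ] yZ Zpp_lt[OF fZ] yc])
        then show "qbar (u (h f')) * psi_hi (Kb (h f')) (h y) = qbar (Tu f') * psi_lo (Kb f') y"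
          using fZ by (simp add: Tu_eq)
      qed
      also have "\<dots> = psi_lo Tu y" using D2[rule_format, of "max D1 D2"] unfolding A'_def D_def by simp
      finally show ?thesis using L by (simp add: Tu_def)
    next
      case False
      have L: "truncation m n (psi_hi u) y = 0" using False by (simp add: truncation_def)
      show ?thesis
      proof (cases "y \<in> Zp m n")
        case False
        have "psi_lo Tu \<in> Ehat m n" by (rule lo.psi_Ehat[OF TuE])
        then show ?thesis using L False by (simp add: Ehat_def Tu_def)
      next
        case True
        have ny: "y (int n) > int n" using True \<open>y \<notin> Zpp m n\<close> by (simp add: Zpp_def)
        have n0: "n \<noteq> 0"
        proof
          assume "n = 0"
          moreover have "y \<in> Zfun m n" using True by (simp add: Zp_def)
          ultimately have "y 0 = 0" by (auto simp: Zfun_def Iset_def posI_def negI_def)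
          then show False using ny \<open>n = 0\<close> by simp
        qed
        have nI: "int n \<in> posI n" using n0 by (simp add: posI_def)
        obtain D2 where D2: "\<forall>D\<ge>D2. psi_lo Tu y = (\<Sum>f\<in>{f. Tu f \<noteq> 0 \<and> (\<forall>i\<in>posI n. - int D \<le> f i)}. qbar (Tu f) * psi_lo (Kb f) y)"
          using lo.psi_expand[OF TuE] by blast
        have "psi_lo Tu y = (\<Sum>f\<in>{f. Tu f \<noteq> 0 \<and> (\<forall>i\<in>posI n. - int D2 \<le> f i)}. qbar (Tu f) * psi_lo (Kb f) y)"
          using D2 by simp
        also have "\<dots> = 0"
        proof (rule sum.neutral, rule ballI)
          fix f assume "f \<in> {f. Tu f \<noteq> 0 \<and> (\<forall>i\<in>posI n. - int D2 \<le> f i)}"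
          then have fZ: "f \<in> Zpp m n" by (auto simp: Tu_eq split: if_splits)
          have v: "\<forall>k\<in>posI n. f k \<le> int n"
            using Zp_mono_pos[OF Zpp_Zp[OF fZ]] fZ by (force simp: Zpp_def)
          have "psi_lo (Kb f) y = 0" by (rule lo.psi_top0[of f "int n" "int n" y, OF Zpp_Zp[OF fZ] v nI ny])
          then show "qbar (Tu f) * psi_lo (Kb f) y = 0" by simp
        qed
        finally show ?thesis using L by (simp add: Tu_def)
      qed
    qed
  qed
qed

end
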